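(* Let $R$ be a local ring and $s\in R$ a central element with $s\in J(R)$. Then $A\in M_2(R;s)$ is strongly $J$-clean if and only if one of the following holds: (1) $A\in J\big(M_2(R;s)\big)$; (2) $I_2-A\in J\big(M_2(R;s)\big)$; (3) $A$ is similar to $\left[\begin{smallmatrix} u&1\\ v&w\end{smallmatrix}\right]$ for some $u\in 1+J(R)$, $v\in U(R)$, $w\in J(R)$ such that the equation $t^2-(vuv^{-1}+w)t+(vuv^{-1}w-s^2v)=0$ has a right root in $1+J(R)$ and the equation $t^2-(u+w)t+(wu-s^2v)=0$ has a right root in $J(R)$; (4) $A$ is similar to $\left[\begin{smallmatrix} w&1\\ v&u\end{smallmatrix}\right]$ for some $u\in 1+J(R)$, $v\in U(R)$, $w\in J(R)$ such that the equation $t^2-(u+vwv^{-1})t+(vwv^{-1}u-s^2v)=0$ has a right root in $J(R)$ and the equation $t^2-(u+w)t+(uw-s^2v)=0$ has a right root in $1+J(R)$.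
   Context: All rings are associative with identity. A ring $R$ is local if $R/J(R)$ is a division ring, where $J(R)$ is the Jacobson radical; $U(R)$ is the group of units. For $a,b\in R$, an element $r\in R$ is a right root of $t^2-at+b$ if $r^2-ar+b=0$. For a ring $R$ and a central element $s\in R$, $M_2(R;s)$ denotes the ring whose elements are the $2\times 2$ arrays $\left[\begin{smallmatrix} a&b\\ c&d\end{smallmatrix}\right]$ with $a,b,c,d\in R$, with componentwise addition and multiplication $\left[\begin{smallmatrix} a&b\\ c&d\end{smallmatrix}\right]\left[\begin{smallmatrix} a'&b'\\ c'&d'\end{smallmatrix}\right]=\left[\begin{smallmatrix} aa'+s^2bc'&ab'+bd'\\ ca'+dc'&s^2cb'+dd'\end{smallmatrix}\right]$, with identity $I_2$. Two elements $A,B\in M_2(R;s)$ are similar if $B=P^{-1}AP$ for some unit $P$ of $M_2(R;s)$. An element $a$ of a ring $T$ is strongly $J$-clean if there is an idempotent $e\in T$ with $ae=ea$ and $a-e\in J(T)$. *)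

theory Defs
  imports "HOL-Algebra.Algebra"
begin

definition left_ideal :: "('a, 'b) ring_scheme \<Rightarrow> 'a set \<Rightarrow> bool" where
  "left_ideal R I \<longleftrightarrow> additive_subgroup I R \<and>
     (\<forall>r \<in> carrier R. \<forall>x \<in> I. r \<otimes>\<^bsub>R\<^esub> x \<in> I)"

definition maximal_left_ideal :: "('a, 'b) ring_scheme \<Rightarrow> 'a set \<Rightarrow> bool" where
  "maximal_left_ideal R M \<longleftrightarrow> left_ideal R M \<and> M \<noteq> carrier R \<and>
     (\<forall>I. left_ideal R I \<and> M \<subseteq> I \<longrightarrow> I = M \<or> I = carrier R)"

definition jacobson :: "('a, 'b) ring_scheme \<Rightarrow> 'a set" where
  "jacobson R = {x \<in> carrier R. \<forall>M. maximal_left_ideal R M \<longrightarrow> x \<in> M}"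

definition division_ring :: "('a, 'b) ring_scheme \<Rightarrow> bool" where
  "division_ring R \<longleftrightarrow> ring R \<and> \<one>\<^bsub>R\<^esub> \<noteq> \<zero>\<^bsub>R\<^esub> \<and>
     (\<forall>x \<in> carrier R. x \<noteq> \<zero>\<^bsub>R\<^esub> \<longrightarrow> x \<in> Units R)"

definition local_ring :: "('a, 'b) ring_scheme \<Rightarrow> bool" where
  "local_ring R \<longleftrightarrow> division_ring (R Quot jacobson R)"

definition central :: "('a, 'b) ring_scheme \<Rightarrow> 'a \<Rightarrow> bool" where
  "central R s \<longleftrightarrow> s \<in> carrier R \<and> (\<forall>x \<in> carrier R. s \<otimes>\<^bsub>R\<^esub> x = x \<otimes>\<^bsub>R\<^esub> s)"

definition one_plus_J :: "('a, 'b) ring_scheme \<Rightarrow> 'a set" where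
  "one_plus_J R = {\<one>\<^bsub>R\<^esub> \<oplus>\<^bsub>R\<^esub> j | j. j \<in> jacobson R}"

definition right_root :: "('a, 'b) ring_scheme \<Rightarrow> 'a \<Rightarrow> 'a \<Rightarrow> 'a \<Rightarrow> bool" where
  "right_root R a b r \<longleftrightarrow>
     (r \<otimes>\<^bsub>R\<^esub> r) \<ominus>\<^bsub>R\<^esub> (a \<otimes>\<^bsub>R\<^esub> r) \<oplus>\<^bsub>R\<^esub> b = \<zero>\<^bsub>R\<^esub>"

(* entries of a 2x2 array [a b; c d], represented as the tuple (a, b, c, d) *)
definition e11 :: "'a \<times> 'a \<times> 'a \<times> 'a \<Rightarrow> 'a" where "e11 M = fst M"
definition e12 :: "'a \<times> 'a \<times> 'a \<times> 'a \<Rightarrow> 'a" where "e12 M = fst (snd M)"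
definition e21 :: "'a \<times> 'a \<times> 'a \<times> 'a \<Rightarrow> 'a" where "e21 M = fst (snd (snd M))"
definition e22 :: "'a \<times> 'a \<times> 'a \<times> 'a \<Rightarrow> 'a" where "e22 M = snd (snd (snd M))"

definition M2_mult :: "('a, 'b) ring_scheme \<Rightarrow> 'a \<Rightarrow> 'a \<times> 'a \<times> 'a \<times> 'a \<Rightarrow> 'a \<times> 'a \<times> 'a \<times> 'a \<Rightarrow> 'a \<times> 'a \<times> 'a \<times> 'a" where
  "M2_mult R s M N =
     (e11 M \<otimes>\<^bsub>R\<^esub> e11 N \<oplus>\<^bsub>R\<^esub> s \<otimes>\<^bsub>R\<^esub> s \<otimes>\<^bsub>R\<^esub> e12 M \<otimes>\<^bsub>R\<^esub> e21 N,
      e11 M \<otimes>\<^bsub>R\<^esub> e12 N \<oplus>\<^bsub>R\<^esub> e12 M \<otimes>\<^bsub>R\<^esub> e22 N,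
      e21 M \<otimes>\<^bsub>R\<^esub> e11 N \<oplus>\<^bsub>R\<^esub> e22 M \<otimes>\<^bsub>R\<^esub> e21 N,
      s \<otimes>\<^bsub>R\<^esub> s \<otimes>\<^bsub>R\<^esub> e21 M \<otimes>\<^bsub>R\<^esub> e12 N \<oplus>\<^bsub>R\<^esub> e22 M \<otimes>\<^bsub>R\<^esub> e22 N)"

definition M2_add :: "('a, 'b) ring_scheme \<Rightarrow> 'a \<times> 'a \<times> 'a \<times> 'a \<Rightarrow> 'a \<times> 'a \<times> 'a \<times> 'a \<Rightarrow> 'a \<times> 'a \<times> 'a \<times> 'a" where
  "M2_add R M N = (e11 M \<oplus>\<^bsub>R\<^esub> e11 N, e12 M \<oplus>\<^bsub>R\<^esub> e12 N,
                   e21 M \<oplus>\<^bsub>R\<^esub> e21 N, e22 M \<oplus>\<^bsub>R\<^esub> e22 N)"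

definition M2 :: "('a, 'b) ring_scheme \<Rightarrow> 'a \<Rightarrow> ('a \<times> 'a \<times> 'a \<times> 'a) ring" where
  "M2 R s = \<lparr> partial_object.carrier = carrier R \<times> carrier R \<times> carrier R \<times> carrier R,
     monoid.mult = M2_mult R s,
     monoid.one = (\<one>\<^bsub>R\<^esub>, \<zero>\<^bsub>R\<^esub>, \<zero>\<^bsub>R\<^esub>, \<one>\<^bsub>R\<^esub>),
     ring.zero = (\<zero>\<^bsub>R\<^esub>, \<zero>\<^bsub>R\<^esub>, \<zero>\<^bsub>R\<^esub>, \<zero>\<^bsub>R\<^esub>),
     ring.add = M2_add R \<rparr>"

definition similar :: "('a, 'b) ring_scheme \<Rightarrow> 'a \<Rightarrow> 'a \<Rightarrow> bool" where
  "similar T A B \<longleftrightarrow> (\<exists>P \<in> Units T. B = inv\<^bsub>T\<^esub> P \<otimes>\<^bsub>T\<^esub> A \<otimes>\<^bsub>T\<^esub> P)"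

definition strongly_J_clean :: "('a, 'b) ring_scheme \<Rightarrow> 'a \<Rightarrow> bool" where
  "strongly_J_clean T a \<longleftrightarrow> (\<exists>e \<in> carrier T. e \<otimes>\<^bsub>T\<^esub> e = e \<and>
     a \<otimes>\<^bsub>T\<^esub> e = e \<otimes>\<^bsub>T\<^esub> a \<and> a \<ominus>\<^bsub>T\<^esub> e \<in> jacobson T)"

end

theory Submission
  imports Defs
begin


context ring begin

lemma addsubI:
  assumes "H \<subseteq> carrier R" "\<zero> \<in> H" "\<And>a b. a\<in>H \<Longrightarrow> b\<in>H \<Longrightarrow> a \<oplus> b \<in> H"
    "\<And>a. a\<in>H \<Longrightarrow> \<ominus>a \<in> H"
  shows "additive_subgroup H R"
  using assms unfolding additive_subgroup_def subgroup_def a_inv_def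
  by (auto simp: monoid_record_simps)

definition linv :: "'a \<Rightarrow> bool" where
  "linv x \<longleftrightarrow> (\<exists>y\<in>carrier R. y \<otimes> x = \<one>)"

lemma left_ideal_sub: "left_ideal R I \<Longrightarrow> I \<subseteq> carrier R"
  unfolding left_ideal_def using additive_subgroup.a_subset by blast

lemma left_ideal_one: "left_ideal R I \<Longrightarrow> \<one> \<in> I \<Longrightarrow> I = carrier R"
  using left_ideal_sub unfolding left_ideal_def by (metis r_one subsetI subset_antisym)

lemma jac_carrier: "x \<in> jacobson R \<Longrightarrow> x \<in> carrier R"
  unfolding jacobson_def by auto

lemma jacI:
  assumes x: "x \<in> carrier R" and h: "\<And>r. r \<in> carrier R \<Longrightarrow> linv (\<one> \<ominus> r \<otimes> x)"
  shows "x \<in> jacobson R"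
  unfolding jacobson_def
proof (safe intro!: x)
  fix M assume M: "maximal_left_ideal R M"
  hence LM: "left_ideal R M" and MC: "M \<noteq> carrier R"
    and mx: "\<And>I. left_ideal R I \<Longrightarrow> M \<subseteq> I \<Longrightarrow> I = M \<or> I = carrier R"
    unfolding maximal_left_ideal_def by auto
  have Msub: "M \<subseteq> carrier R" using left_ideal_sub[OF LM] .
  have asM: "additive_subgroup M R" using LM unfolding left_ideal_def by auto
  show "x \<in> M"
  proof (rule ccontr)
    assume xM: "x \<notin> M"
    define I where "I = {m \<oplus> r \<otimes> x | m r. m \<in> M \<and> r \<in> carrier R}"
    have Isub: "I \<subseteq> carrier R" unfolding I_def using Msub x by auto
    have "left_ideal R I"
      unfolding left_ideal_def
    proof (intro conjI ballI)
      show "additive_subgroup I R"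
      proof (rule addsubI[OF Isub])
        show "\<zero> \<in> I" unfolding I_def
          by (rule CollectI, rule exI[of _ \<zero>], rule exI[of _ \<zero>])
             (use x additive_subgroup.zero_closed[OF asM] in auto)
        fix a b assume "a \<in> I" "b \<in> I"
        then obtain m1 r1 m2 r2 where a: "a = m1 \<oplus> r1 \<otimes> x" "m1 \<in> M" "r1 \<in> carrier R"
          and b: "b = m2 \<oplus> r2 \<otimes> x" "m2 \<in> M" "r2 \<in> carrier R" unfolding I_def by auto
        have "m1 \<in> carrier R" "m2 \<in> carrier R" using a b Msub by auto
        hence "a \<oplus> b = (m1 \<oplus> m2) \<oplus> (r1 \<oplus> r2) \<otimes> x"
          using a b x by simp algebra
        thus "a \<oplus> b \<in> I" unfolding I_def
          using a b additive_subgroup.a_closed[OF asM] by blast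
      next
        fix a assume "a \<in> I"
        then obtain m1 r1 where a: "a = m1 \<oplus> r1 \<otimes> x" "m1 \<in> M" "r1 \<in> carrier R"
          unfolding I_def by auto
        have "m1 \<in> carrier R" using a Msub by auto
        hence "\<ominus> a = (\<ominus> m1) \<oplus> (\<ominus> r1) \<otimes> x"
          using a x by simp algebra
        thus "\<ominus> a \<in> I" unfolding I_def
          using a additive_subgroup.a_inv_closed[OF asM] by blast
      qed
    next
      fix r y assume r: "r \<in> carrier R" and "y \<in> I"
      then obtain m1 r1 where a: "y = m1 \<oplus> r1 \<otimes> x" "m1 \<in> M" "r1 \<in> carrier R"
        unfolding I_def by auto
      have "m1 \<in> carrier R" using a Msub by auto
      hence "r \<otimes> y = r \<otimes> m1 \<oplus> (r \<otimes> r1) \<otimes> x"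
        using a x r by simp algebra
      moreover have "r \<otimes> m1 \<in> M" using LM r a unfolding left_ideal_def by auto
      ultimately show "r \<otimes> y \<in> I" unfolding I_def using r a by blast
    qed
    moreover have "M \<subseteq> I"
    proof
      fix m assume "m \<in> M"
      hence "m = m \<oplus> \<zero> \<otimes> x" using Msub x by (auto simp: subsetD)
      thus "m \<in> I" unfolding I_def using \<open>m \<in> M\<close> by blast
    qed
    moreover have "x \<in> I"
    proof -
      have "x = \<zero> \<oplus> \<one> \<otimes> x" using x by simp
      thus ?thesis unfolding I_def using additive_subgroup.zero_closed[OF asM] by blast
    qed
    ultimately have "I = carrier R" using mx xM by blast
    then obtain m r where mr: "\<one> = m \<oplus> r \<otimes> x" "m \<in> M" "r \<in> carrier R"
      unfolding I_def by (smt (verit) Collect_mem_eq mem_Collect_eq one_closed)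
    have mC: "m \<in> carrier R" using mr Msub by auto
    have "m = \<one> \<ominus> r \<otimes> x" using mr mC x
      by (metis a_minus_def add.inv_solve_right' m_closed one_closed)
    then obtain y where y: "y \<in> carrier R" "y \<otimes> m = \<one>" using h[OF mr(3)] unfolding linv_def by auto
    have "\<one> \<in> M" using LM y mr unfolding left_ideal_def by metis
    hence "M = carrier R" by (rule left_ideal_one[OF LM])
    thus False using MC by simp
  qed
qed


lemma chain_left_ideal:
  assumes ne: "C \<noteq> {}" and ch: "subset.chain {I. left_ideal R I \<and> L \<subseteq> I \<and> \<one> \<notin> I} C"
  shows "\<Union>C \<in> {I. left_ideal R I \<and> L \<subseteq> I \<and> \<one> \<notin> I}"
proof -
  have mem: "\<And>I. I \<in> C \<Longrightarrow> left_ideal R I \<and> L \<subseteq> I \<and> \<one> \<notin> I"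
    using ch unfolding subset_chain_def by auto
  have tot: "\<And>I J. I \<in> C \<Longrightarrow> J \<in> C \<Longrightarrow> I \<subseteq> J \<or> J \<subseteq> I"
    using ch unfolding subset_chain_def by auto
  have asg: "\<And>I. I \<in> C \<Longrightarrow> additive_subgroup I R"
    using mem unfolding left_ideal_def by simp
  obtain I0 where I0: "I0 \<in> C" using ne by auto
  have "additive_subgroup (\<Union>C) R"
  proof (rule addsubI)
    show "\<Union>C \<subseteq> carrier R"
    proof
      fix y assume "y \<in> \<Union>C"
      then obtain I where "I \<in> C" "y \<in> I" by auto
      thus "y \<in> carrier R" using left_ideal_sub mem by blast
    qed
    show "\<zero> \<in> \<Union>C" using I0 additive_subgroup.zero_closed[OF asg[OF I0]] by blast
    fix a b assume "a \<in> \<Union>C" "b \<in> \<Union>C"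
    then obtain I J where IJ: "I \<in> C" "J \<in> C" "a \<in> I" "b \<in> J" by auto
    show "a \<oplus> b \<in> \<Union>C"
    proof (cases "I \<subseteq> J")
      case True
      hence "a \<oplus> b \<in> J" using IJ additive_subgroup.a_closed[OF asg[of J]] by blast
      thus ?thesis using IJ by blast
    next
      case False
      hence "J \<subseteq> I" using tot IJ by blast
      hence "a \<oplus> b \<in> I" using IJ additive_subgroup.a_closed[OF asg[of I]] by blast
      thus ?thesis using IJ by blast
    qed
  next
    fix a assume "a \<in> \<Union>C"
    then obtain I where I: "I \<in> C" "a \<in> I" by auto
    hence "\<ominus> a \<in> I" using additive_subgroup.a_inv_closed[OF asg[of I]] by blast
    thus "\<ominus> a \<in> \<Union>C" using I by blast
  qed
  moreover have "\<forall>r\<in>carrier R. \<forall>x\<in>\<Union>C. r \<otimes> x \<in> \<Union>C"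
  proof (intro ballI)
    fix r x assume r: "r \<in> carrier R" and "x \<in> \<Union>C"
    then obtain I where I: "I \<in> C" "x \<in> I" by auto
    hence "r \<otimes> x \<in> I" using mem[OF I(1)] r unfolding left_ideal_def by blast
    thus "r \<otimes> x \<in> \<Union>C" using I by blast
  qed
  ultimately have "left_ideal R (\<Union>C)" unfolding left_ideal_def by blast
  moreover have "L \<subseteq> \<Union>C" using mem[OF I0] I0 by blast
  moreover have "\<one> \<notin> \<Union>C" using mem by blast
  ultimately show ?thesis by blast
qed

lemma jacD:
  assumes x: "x \<in> jacobson R" and r: "r \<in> carrier R"
  shows "linv (\<one> \<ominus> r \<otimes> x)"
proof (rule ccontr)
  assume nl: "\<not> linv (\<one> \<ominus> r \<otimes> x)"
  have xC: "x \<in> carrier R" using x jac_carrier by auto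
  define z where "z = \<one> \<ominus> r \<otimes> x"
  have zC: "z \<in> carrier R" unfolding z_def using xC r by auto
  define L where "L = {a \<otimes> z | a. a \<in> carrier R}"
  define Fam where "Fam = {I. left_ideal R I \<and> L \<subseteq> I \<and> \<one> \<notin> I}"
  have LA: "L \<in> Fam" unfolding Fam_def
  proof (intro CollectI conjI)
    show "left_ideal R L" unfolding left_ideal_def
    proof (intro conjI ballI)
      show "additive_subgroup L R"
      proof (rule addsubI)
        show "L \<subseteq> carrier R" unfolding L_def using zC by auto
        show "\<zero> \<in> L" unfolding L_def using zC by (auto intro!: exI[of _ \<zero>])
        fix a b assume "a \<in> L" "b \<in> L"
        then obtain a1 b1 where "a = a1 \<otimes> z" "b = b1 \<otimes> z" "a1 \<in> carrier R" "b1 \<in> carrier R"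
          unfolding L_def by auto
        hence "a \<oplus> b = (a1 \<oplus> b1) \<otimes> z" using zC by (simp add: l_distr)
        thus "a \<oplus> b \<in> L" unfolding L_def using \<open>a1 \<in> carrier R\<close> \<open>b1 \<in> carrier R\<close> by blast
      next
        fix a assume "a \<in> L"
        then obtain a1 where "a = a1 \<otimes> z" "a1 \<in> carrier R" unfolding L_def by auto
        hence "\<ominus> a = (\<ominus> a1) \<otimes> z" using zC by (simp add: l_minus)
        thus "\<ominus> a \<in> L" unfolding L_def using \<open>a1 \<in> carrier R\<close> by blast
      qed
    next
      fix b y assume "b \<in> carrier R" "y \<in> L"
      then obtain a1 where "y = a1 \<otimes> z" "a1 \<in> carrier R" unfolding L_def by auto
      hence "b \<otimes> y = (b \<otimes> a1) \<otimes> z" using zC \<open>b \<in> carrier R\<close> by (simp add: m_assoc)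
      thus "b \<otimes> y \<in> L" unfolding L_def using \<open>a1 \<in> carrier R\<close> \<open>b \<in> carrier R\<close> by blast
    qed
    show "L \<subseteq> L" by simp
    show "\<one> \<notin> L"
    proof
      assume "\<one> \<in> L"
      then obtain a where "a \<in> carrier R" "a \<otimes> z = \<one>" unfolding L_def by auto
      thus False using nl unfolding linv_def z_def by blast
    qed
  qed
  have ne: "Fam \<noteq> {}" using LA by auto
  have chn: "\<And>C. C \<noteq> {} \<Longrightarrow> subset.chain Fam C \<Longrightarrow> \<Union>C \<in> Fam"
    unfolding Fam_def by (rule chain_left_ideal)
  obtain M where M: "M \<in> Fam" and Mmax: "\<forall>Y\<in>Fam. M \<subseteq> Y \<longrightarrow> Y = M"
    using subset_Zorn_nonempty[OF ne chn] by blast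
  have "maximal_left_ideal R M" unfolding maximal_left_ideal_def
  proof (intro conjI allI impI)
    show "left_ideal R M" using M unfolding Fam_def by auto
    show "M \<noteq> carrier R" using M unfolding Fam_def by auto
    fix I assume I: "left_ideal R I \<and> M \<subseteq> I"
    show "I = M \<or> I = carrier R"
    proof (cases "\<one> \<in> I")
      case True thus ?thesis using left_ideal_one I by auto
    next
      case False
      hence "I \<in> Fam" using I M unfolding Fam_def by auto
      thus ?thesis using Mmax I by auto
    qed
  qed
  hence xM: "x \<in> M" using x unfolding jacobson_def by blast
  have LM: "left_ideal R M" using M unfolding Fam_def by simp
  have asM: "additive_subgroup M R" using LM unfolding left_ideal_def by simp
  have rxM: "r \<otimes> x \<in> M" using LM r xM unfolding left_ideal_def by blast
  have "z \<in> L" unfolding L_def using zC by (intro CollectI exI[of _ \<one>]) simp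
  hence "z \<in> M" using M unfolding Fam_def by blast
  hence "z \<oplus> r \<otimes> x \<in> M" using additive_subgroup.a_closed[OF asM] rxM by blast
  moreover have "z \<oplus> r \<otimes> x = \<one>" unfolding z_def using xC r by algebra
  ultimately show False using M unfolding Fam_def by auto
qed

end



context ring begin

lemma maxl_asg: "maximal_left_ideal R M \<Longrightarrow> additive_subgroup M R"
  unfolding maximal_left_ideal_def left_ideal_def by simp

lemma maxl_lm: "maximal_left_ideal R M \<Longrightarrow> r \<in> carrier R \<Longrightarrow> x \<in> M \<Longrightarrow> r \<otimes> x \<in> M"
  unfolding maximal_left_ideal_def left_ideal_def by simp

lemma jacE: "x \<in> jacobson R \<Longrightarrow> maximal_left_ideal R M \<Longrightarrow> x \<in> M"
  unfolding jacobson_def by simp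

lemma jacI2: "x \<in> carrier R \<Longrightarrow> (\<And>M. maximal_left_ideal R M \<Longrightarrow> x \<in> M) \<Longrightarrow> x \<in> jacobson R"
  unfolding jacobson_def by simp

lemma jac_zero: "\<zero> \<in> jacobson R"
  by (rule jacI2) (auto dest: maxl_asg intro: additive_subgroup.zero_closed)

lemma jac_add: "x \<in> jacobson R \<Longrightarrow> y \<in> jacobson R \<Longrightarrow> x \<oplus> y \<in> jacobson R"
  by (rule jacI2) (auto dest: maxl_asg jac_carrier intro: additive_subgroup.a_closed jacE)

lemma jac_neg: "x \<in> jacobson R \<Longrightarrow> \<ominus> x \<in> jacobson R"
  by (rule jacI2) (auto dest: maxl_asg jac_carrier intro: additive_subgroup.a_inv_closed jacE)

lemma jac_minus: "x \<in> jacobson R \<Longrightarrow> y \<in> jacobson R \<Longrightarrow> x \<ominus> y \<in> jacobson R"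
  unfolding a_minus_def using jac_add jac_neg by blast

lemma jac_lmult: "r \<in> carrier R \<Longrightarrow> x \<in> jacobson R \<Longrightarrow> r \<otimes> x \<in> jacobson R"
  by (rule jacI2) (auto dest: jac_carrier intro: maxl_lm jacE)

lemma linv_unit:
  assumes "y \<in> carrier R" "x \<in> carrier R" "y \<otimes> x = \<one>" "linv y"
  shows "x \<in> Units R" "y \<in> Units R"
proof -
  obtain z where z: "z \<in> carrier R" "z \<otimes> y = \<one>" using assms(4) unfolding linv_def by auto
  have "z = z \<otimes> (y \<otimes> x)" using assms(3) z(1) by simp
  also have "\<dots> = (z \<otimes> y) \<otimes> x" by (rule m_assoc[symmetric, OF z(1) assms(1,2)])
  also have "\<dots> = x" using assms z by simp
  finally have "z = x" .
  thus "x \<in> Units R" "y \<in> Units R" unfolding Units_def using assms z by auto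
qed

lemma jac_one_plus_unit:
  assumes x: "x \<in> jacobson R" shows "\<one> \<oplus> x \<in> Units R"
proof -
  have xC: "x \<in> carrier R" using x jac_carrier by auto
  have "linv (\<one> \<ominus> (\<ominus> \<one>) \<otimes> x)" by (rule jacD[OF x]) simp
  moreover have "\<one> \<ominus> (\<ominus> \<one>) \<otimes> x = \<one> \<oplus> x" using xC by algebra
  ultimately obtain y where y: "y \<in> carrier R" "y \<otimes> (\<one> \<oplus> x) = \<one>" unfolding linv_def by auto
  have "linv (\<one> \<ominus> y \<otimes> x)" by (rule jacD[OF x y(1)])
  moreover have "\<one> \<ominus> y \<otimes> x = y" using y xC
    by (metis a_minus_def add.inv_solve_right m_closed one_closed r_distr r_one)
  ultimately have "linv y" by simp
  thus ?thesis using linv_unit[OF y(1) _ y(2)] xC by auto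
qed

lemma jac_one_minus_unit: "x \<in> jacobson R \<Longrightarrow> \<one> \<ominus> x \<in> Units R"
  using jac_one_plus_unit[OF jac_neg] unfolding a_minus_def by simp

lemma unit_plus_jac:
  assumes u: "u \<in> Units R" and x: "x \<in> jacobson R" shows "u \<oplus> x \<in> Units R"
proof -
  have uC: "u \<in> carrier R" "inv u \<in> carrier R" using u by auto
  have xC: "x \<in> carrier R" using x jac_carrier by auto
  have "u \<oplus> x = u \<otimes> (\<one> \<oplus> inv u \<otimes> x)" using uC xC u
    by (simp add: r_distr m_assoc[symmetric] Units_r_inv)
  moreover have "\<one> \<oplus> inv u \<otimes> x \<in> Units R" by (rule jac_one_plus_unit[OF jac_lmult[OF uC(2) x]])
  ultimately show ?thesis using u by simp
qed

lemma jac_rmult: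
  assumes x: "x \<in> jacobson R" and a: "a \<in> carrier R" shows "x \<otimes> a \<in> jacobson R"
proof (rule jacI)
  have xC: "x \<in> carrier R" using x jac_carrier by auto
  show "x \<otimes> a \<in> carrier R" using xC a by simp
  fix r assume r: "r \<in> carrier R"
  have "\<one> \<ominus> a \<otimes> (r \<otimes> x) \<in> Units R"
    by (rule jac_one_minus_unit[OF jac_lmult[OF a jac_lmult[OF r x]]])
  then obtain z where z: "z \<in> carrier R" "z \<otimes> (\<one> \<ominus> a \<otimes> (r \<otimes> x)) = \<one>"
    "(\<one> \<ominus> a \<otimes> (r \<otimes> x)) \<otimes> z = \<one>"
    unfolding Units_def by auto
  have "(\<one> \<oplus> r \<otimes> x \<otimes> z \<otimes> a) \<otimes> (\<one> \<ominus> r \<otimes> (x \<otimes> a))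
      = \<one> \<ominus> r \<otimes> x \<otimes> a \<oplus> r \<otimes> x \<otimes> ((z \<otimes> (\<one> \<ominus> a \<otimes> (r \<otimes> x))) \<otimes> a)"
    using z(1) xC a r by (simp add: r_distr l_distr a_minus_def r_minus l_minus m_assoc a_ac minus_add)
  also have "\<dots> = \<one>" using z xC a r by simp algebra
  finally show "linv (\<one> \<ominus> r \<otimes> (x \<otimes> a))" unfolding linv_def
    using z(1) xC a r by (intro bexI[of _ "\<one> \<oplus> r \<otimes> x \<otimes> z \<otimes> a"]) auto
qed

lemma jac_conj:
  assumes "u \<in> Units R" "x \<in> jacobson R" shows "u \<otimes> x \<otimes> inv u \<in> jacobson R"
  using assms by (intro jac_rmult jac_lmult) auto

lemma jac_units_disj:
  assumes "\<one> \<noteq> \<zero>" "x \<in> jacobson R" shows "x \<notin> Units R"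
proof
  assume u: "x \<in> Units R"
  have "\<one> \<ominus> inv x \<otimes> x \<in> Units R"
    by (rule jac_one_minus_unit[OF jac_lmult[OF _ assms(2)]]) (use u in auto)
  hence "\<zero> \<in> Units R" using u by (simp add: Units_l_inv a_minus_def r_neg)
  thus False using assms(1) unfolding Units_def by auto
qed

end



context ring begin

lemma units_of_two_sided:
  assumes x: "x \<in> carrier R" and y: "y \<in> carrier R"
    and u1: "x \<otimes> y \<in> Units R" and u2: "y \<otimes> x \<in> Units R"
  shows "x \<in> Units R"
proof -
  define p where "p = inv (x \<otimes> y)"
  define q where "q = inv (y \<otimes> x)"
  have pC: "p \<in> carrier R" and qC: "q \<in> carrier R" unfolding p_def q_def using u1 u2 by auto
  have r: "x \<otimes> (y \<otimes> p) = \<one>" unfolding p_def using u1 x y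
    by (metis Units_r_inv m_assoc Units_inv_closed)
  have l: "(q \<otimes> y) \<otimes> x = \<one>" unfolding q_def using u2 x y
    by (metis Units_l_inv m_assoc Units_inv_closed)
  have "q \<otimes> y = (q \<otimes> y) \<otimes> (x \<otimes> (y \<otimes> p))" using r qC y by simp
  also have "\<dots> = ((q \<otimes> y) \<otimes> x) \<otimes> (y \<otimes> p)" using qC y x pC by (simp add: m_assoc)
  also have "\<dots> = y \<otimes> p" using l y pC by simp
  finally have e: "q \<otimes> y = y \<otimes> p" .
  show ?thesis unfolding Units_def using x r l e qC y pC
    by (intro CollectI conjI bexI[of _ "y \<otimes> p"]) auto
qed

lemma one_plus_J_iff: "z \<in> one_plus_J R \<longleftrightarrow> z \<in> carrier R \<and> z \<ominus> \<one> \<in> jacobson R"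
proof
  assume "z \<in> one_plus_J R"
  then obtain j where j: "j \<in> jacobson R" "z = \<one> \<oplus> j" unfolding one_plus_J_def by auto
  have jC: "j \<in> carrier R" using j jac_carrier by auto
  have "z \<ominus> \<one> = j" using j jC by (simp add: a_minus_def) algebra
  thus "z \<in> carrier R \<and> z \<ominus> \<one> \<in> jacobson R" using j jC by simp
next
  assume "z \<in> carrier R \<and> z \<ominus> \<one> \<in> jacobson R"
  moreover hence "z = \<one> \<oplus> (z \<ominus> \<one>)" by (simp add: a_minus_def) algebra
  ultimately show "z \<in> one_plus_J R" unfolding one_plus_J_def by blast
qed

lemma one_plus_J_unit: "z \<in> one_plus_J R \<Longrightarrow> z \<in> Units R"
  unfolding one_plus_J_def using jac_one_plus_unit by auto

end

locale locring = ring +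
  assumes loc: "local_ring R"
begin

lemma one_ne_zero: "\<one> \<noteq> \<zero>"
proof
  assume h: "\<one> = \<zero>"
  have all0: "\<And>x. x \<in> carrier R \<Longrightarrow> x = \<zero>" using h by (metis r_one r_null)
  have J0: "jacobson R = {\<zero>}" using jac_zero all0 jac_carrier by blast
  have "jacobson R +> \<one> = {\<zero>}" unfolding J0 a_r_coset_def' using h by simp
  hence "\<one>\<^bsub>R Quot jacobson R\<^esub> = \<zero>\<^bsub>R Quot jacobson R\<^esub>" unfolding FactRing_def using J0 by simp
  thus False using loc unfolding local_ring_def division_ring_def by simp
qed

lemma nonjac_unit:
  assumes x: "x \<in> carrier R" and nx: "x \<notin> jacobson R"
  shows "x \<in> Units R"
proof -
  let ?J = "jacobson R"
  let ?Q = "R Quot ?J"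
  have rc: "\<And>a. a \<in> carrier R \<Longrightarrow> a \<in> ?J +> a"
    unfolding a_r_coset_def' using jac_zero by (metis UN_iff l_zero singletonI)
  have inQ: "\<And>a. a \<in> carrier R \<Longrightarrow> ?J +> a \<in> carrier ?Q"
    unfolding FactRing_def A_RCOSETS_def' by auto
  have "?J +> x \<noteq> ?J" using rc[OF x] nx by auto
  hence "?J +> x \<noteq> \<zero>\<^bsub>?Q\<^esub>" unfolding FactRing_def by simp
  hence "?J +> x \<in> Units ?Q" using loc inQ[OF x] unfolding local_ring_def division_ring_def by blast
  then obtain Y where Y: "Y \<in> carrier ?Q" "Y \<otimes>\<^bsub>?Q\<^esub> (?J +> x) = \<one>\<^bsub>?Q\<^esub>"
    "(?J +> x) \<otimes>\<^bsub>?Q\<^esub> Y = \<one>\<^bsub>?Q\<^esub>" unfolding Units_def by auto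
  then obtain y where y: "y \<in> carrier R" "Y = ?J +> y"
    unfolding FactRing_def A_RCOSETS_def' by auto
  have cos: "\<And>a b. a \<in> carrier R \<Longrightarrow> b \<in> carrier R \<Longrightarrow> a \<otimes> b \<in> rcoset_mult R ?J (?J +> a) (?J +> b)"
    unfolding rcoset_mult_def using rc by blast
  have "x \<otimes> y \<in> ?J +> \<one>" using cos[OF x y(1)] Y(3) y(2) unfolding FactRing_def by simp
  then obtain j1 where j1: "j1 \<in> ?J" "x \<otimes> y = j1 \<oplus> \<one>" unfolding a_r_coset_def' by auto
  have "y \<otimes> x \<in> ?J +> \<one>" using cos[OF y(1) x] Y(2) y(2) unfolding FactRing_def by simp
  then obtain j2 where j2: "j2 \<in> ?J" "y \<otimes> x = j2 \<oplus> \<one>" unfolding a_r_coset_def' by auto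
  have "x \<otimes> y \<in> Units R" using j1 jac_one_plus_unit jac_carrier by (metis a_comm one_closed)
  moreover have "y \<otimes> x \<in> Units R" using j2 jac_one_plus_unit jac_carrier by (metis a_comm one_closed)
  ultimately show ?thesis using units_of_two_sided x y(1) by blast
qed

lemma jac_iff_nonunit: "x \<in> carrier R \<Longrightarrow> x \<in> jacobson R \<longleftrightarrow> x \<notin> Units R"
  using nonjac_unit jac_units_disj[OF one_ne_zero] by blast

lemma idem_cases:
  assumes x: "x \<in> carrier R" and h: "x \<otimes> x \<ominus> x \<in> jacobson R"
  shows "x \<in> jacobson R \<or> x \<ominus> \<one> \<in> jacobson R"
proof (cases "x \<in> jacobson R")
  case False
  hence u: "x \<in> Units R" using nonjac_unit x by blast
  have "x \<ominus> \<one> = inv x \<otimes> (x \<otimes> x \<ominus> x)" using u x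
    by (simp add: a_minus_def r_distr r_minus m_assoc[symmetric] Units_l_inv)
  thus ?thesis using jac_lmult[OF _ h] u by simp
qed simp

end



locale m2ctx = ring R for R (structure) +
  fixes s assumes cen: "central R s"
begin

lemma sC[simp]: "s \<in> carrier R" using cen unfolding central_def by auto

lemma sl: "x \<in> carrier R \<Longrightarrow> y \<in> carrier R \<Longrightarrow> x \<otimes> (s \<otimes> y) = s \<otimes> (x \<otimes> y)"
  using cen unfolding central_def by (metis m_assoc sC)

lemma sr: "x \<in> carrier R \<Longrightarrow> x \<otimes> s = s \<otimes> x"
  using cen unfolding central_def by auto

lemma M2_carrier: "carrier (M2 R s) = carrier R \<times> carrier R \<times> carrier R \<times> carrier R"
  unfolding M2_def by simp

lemma M2_mem[simp]: "(a, b, c, d) \<in> carrier (M2 R s) \<longleftrightarrow>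
  a \<in> carrier R \<and> b \<in> carrier R \<and> c \<in> carrier R \<and> d \<in> carrier R"
  unfolding M2_carrier by simp

lemma M2_mult[simp]: "(a, b, c, d) \<otimes>\<^bsub>M2 R s\<^esub> (a', b', c', d') =
  (a \<otimes> a' \<oplus> s \<otimes> s \<otimes> b \<otimes> c', a \<otimes> b' \<oplus> b \<otimes> d', c \<otimes> a' \<oplus> d \<otimes> c',
   s \<otimes> s \<otimes> c \<otimes> b' \<oplus> d \<otimes> d')"
  unfolding M2_def M2_mult_def e11_def e12_def e21_def e22_def by simp

lemma M2_add[simp]: "(a, b, c, d) \<oplus>\<^bsub>M2 R s\<^esub> (a', b', c', d') =
  (a \<oplus> a', b \<oplus> b', c \<oplus> c', d \<oplus> d')"
  unfolding M2_def M2_add_def e11_def e12_def e21_def e22_def by simp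

lemma M2_one[simp]: "\<one>\<^bsub>M2 R s\<^esub> = (\<one>, \<zero>, \<zero>, \<one>)"
  unfolding M2_def by simp

lemma M2_zero[simp]: "\<zero>\<^bsub>M2 R s\<^esub> = (\<zero>, \<zero>, \<zero>, \<zero>)"
  unfolding M2_def by simp

lemma M2_cases: "M \<in> carrier (M2 R s) \<Longrightarrow> (\<And>a b c d. M = (a, b, c, d) \<Longrightarrow> a \<in> carrier R \<Longrightarrow>
   b \<in> carrier R \<Longrightarrow> c \<in> carrier R \<Longrightarrow> d \<in> carrier R \<Longrightarrow> P) \<Longrightarrow> P"
  unfolding M2_carrier by auto

lemma M2_assoc:
  assumes h: "a \<in> carrier R" "b \<in> carrier R" "c \<in> carrier R" "d \<in> carrier R"
        "a' \<in> carrier R" "b' \<in> carrier R" "c' \<in> carrier R" "d' \<in> carrier R"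
        "a'' \<in> carrier R" "b'' \<in> carrier R" "c'' \<in> carrier R" "d'' \<in> carrier R"
  shows "(a, b, c, d) \<otimes>\<^bsub>M2 R s\<^esub> (a', b', c', d') \<otimes>\<^bsub>M2 R s\<^esub> (a'', b'', c'', d'') =
         (a, b, c, d) \<otimes>\<^bsub>M2 R s\<^esub> ((a', b', c', d') \<otimes>\<^bsub>M2 R s\<^esub> (a'', b'', c'', d''))"
  using h by (simp add: r_distr l_distr m_assoc a_ac sl[of a] sl[of b] sl[of c] sl[of d]
            sl[of a'] sl[of b'] sl[of c'] sl[of d'])


lemma M2_ex: "x \<in> carrier (M2 R s) \<Longrightarrow> \<exists>a b c d. x = (a, b, c, d) \<and> a \<in> carrier R \<and>
   b \<in> carrier R \<and> c \<in> carrier R \<and> d \<in> carrier R"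
  unfolding M2_carrier by auto

lemma abgT: "abelian_group (M2 R s)"
proof (rule abelian_groupI)
  fix x y z assume x: "x \<in> carrier (M2 R s)" and y: "y \<in> carrier (M2 R s)" and z: "z \<in> carrier (M2 R s)"
  obtain a b c d where X: "x = (a, b, c, d)" "a \<in> carrier R" "b \<in> carrier R" "c \<in> carrier R" "d \<in> carrier R"
    using M2_ex[OF x] by blast
  obtain a' b' c' d' where Y: "y = (a', b', c', d')" "a' \<in> carrier R" "b' \<in> carrier R" "c' \<in> carrier R" "d' \<in> carrier R"
    using M2_ex[OF y] by blast
  obtain a'' b'' c'' d'' where Z: "z = (a'', b'', c'', d'')" "a'' \<in> carrier R" "b'' \<in> carrier R" "c'' \<in> carrier R" "d'' \<in> carrier R"
    using M2_ex[OF z] by blast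
  show "x \<oplus>\<^bsub>M2 R s\<^esub> y \<in> carrier (M2 R s)" unfolding X Y using X Y by simp
  show "x \<oplus>\<^bsub>M2 R s\<^esub> y \<oplus>\<^bsub>M2 R s\<^esub> z = x \<oplus>\<^bsub>M2 R s\<^esub> (y \<oplus>\<^bsub>M2 R s\<^esub> z)"
    unfolding X Y Z using X Y Z by (simp add: a_assoc)
  show "x \<oplus>\<^bsub>M2 R s\<^esub> y = y \<oplus>\<^bsub>M2 R s\<^esub> x" unfolding X Y using X Y by (simp add: a_comm)
next
  show "\<zero>\<^bsub>M2 R s\<^esub> \<in> carrier (M2 R s)" by simp
next
  fix x assume x: "x \<in> carrier (M2 R s)"
  obtain a b c d where X: "x = (a, b, c, d)" "a \<in> carrier R" "b \<in> carrier R" "c \<in> carrier R" "d \<in> carrier R"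
    using M2_ex[OF x] by blast
  show "\<zero>\<^bsub>M2 R s\<^esub> \<oplus>\<^bsub>M2 R s\<^esub> x = x" unfolding X using X by simp
  show "\<exists>y\<in>carrier (M2 R s). y \<oplus>\<^bsub>M2 R s\<^esub> x = \<zero>\<^bsub>M2 R s\<^esub>" unfolding X using X
    by (intro bexI[of _ "(\<ominus> a, \<ominus> b, \<ominus> c, \<ominus> d)"]) (auto simp: l_neg)
qed

lemma monT: "monoid (M2 R s)"
proof (rule monoidI)
  fix x y z assume x: "x \<in> carrier (M2 R s)" and y: "y \<in> carrier (M2 R s)" and z: "z \<in> carrier (M2 R s)"
  obtain a b c d where X: "x = (a, b, c, d)" "a \<in> carrier R" "b \<in> carrier R" "c \<in> carrier R" "d \<in> carrier R"
    using M2_ex[OF x] by blast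
  obtain a' b' c' d' where Y: "y = (a', b', c', d')" "a' \<in> carrier R" "b' \<in> carrier R" "c' \<in> carrier R" "d' \<in> carrier R"
    using M2_ex[OF y] by blast
  obtain a'' b'' c'' d'' where Z: "z = (a'', b'', c'', d'')" "a'' \<in> carrier R" "b'' \<in> carrier R" "c'' \<in> carrier R" "d'' \<in> carrier R"
    using M2_ex[OF z] by blast
  show "x \<otimes>\<^bsub>M2 R s\<^esub> y \<in> carrier (M2 R s)" unfolding X Y using X Y by simp
  show "x \<otimes>\<^bsub>M2 R s\<^esub> y \<otimes>\<^bsub>M2 R s\<^esub> z = x \<otimes>\<^bsub>M2 R s\<^esub> (y \<otimes>\<^bsub>M2 R s\<^esub> z)"
    unfolding X Y Z by (rule M2_assoc) (use X Y Z in auto)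
next
  fix x assume x: "x \<in> carrier (M2 R s)"
  obtain a b c d where X: "x = (a, b, c, d)" "a \<in> carrier R" "b \<in> carrier R" "c \<in> carrier R" "d \<in> carrier R"
    using M2_ex[OF x] by blast
  show "\<one>\<^bsub>M2 R s\<^esub> \<otimes>\<^bsub>M2 R s\<^esub> x = x" unfolding X using X by simp
  show "x \<otimes>\<^bsub>M2 R s\<^esub> \<one>\<^bsub>M2 R s\<^esub> = x" unfolding X using X by simp
qed simp

lemma ringT: "ring (M2 R s)"
proof (rule ringI[OF abgT monT])
  fix x y z assume x: "x \<in> carrier (M2 R s)" and y: "y \<in> carrier (M2 R s)" and z: "z \<in> carrier (M2 R s)"
  obtain a b c d where X: "x = (a, b, c, d)" "a \<in> carrier R" "b \<in> carrier R" "c \<in> carrier R" "d \<in> carrier R"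
    using M2_ex[OF x] by blast
  obtain a' b' c' d' where Y: "y = (a', b', c', d')" "a' \<in> carrier R" "b' \<in> carrier R" "c' \<in> carrier R" "d' \<in> carrier R"
    using M2_ex[OF y] by blast
  obtain a'' b'' c'' d'' where Z: "z = (a'', b'', c'', d'')" "a'' \<in> carrier R" "b'' \<in> carrier R" "c'' \<in> carrier R" "d'' \<in> carrier R"
    using M2_ex[OF z] by blast
  show "(x \<oplus>\<^bsub>M2 R s\<^esub> y) \<otimes>\<^bsub>M2 R s\<^esub> z = x \<otimes>\<^bsub>M2 R s\<^esub> z \<oplus>\<^bsub>M2 R s\<^esub> y \<otimes>\<^bsub>M2 R s\<^esub> z"
    unfolding X Y Z using X Y Z by (simp add: r_distr l_distr m_assoc a_ac)
  show "z \<otimes>\<^bsub>M2 R s\<^esub> (x \<oplus>\<^bsub>M2 R s\<^esub> y) = z \<otimes>\<^bsub>M2 R s\<^esub> x \<oplus>\<^bsub>M2 R s\<^esub> z \<otimes>\<^bsub>M2 R s\<^esub> y"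
    unfolding X Y Z using X Y Z by (simp add: r_distr l_distr m_assoc a_ac)
qed

end



context ring begin

lemma unitsI2: "x \<in> carrier R \<Longrightarrow> y \<in> carrier R \<Longrightarrow> x \<otimes> y = \<one> \<Longrightarrow> y \<otimes> x = \<one> \<Longrightarrow> x \<in> Units R"
  unfolding Units_def by auto

lemma inv_eqI: "x \<in> carrier R \<Longrightarrow> y \<in> carrier R \<Longrightarrow> x \<otimes> y = \<one> \<Longrightarrow> y \<otimes> x = \<one> \<Longrightarrow> inv x = y"
  using inv_unique' by simp

lemma ucancel1: "u \<in> Units R \<Longrightarrow> y \<in> carrier R \<Longrightarrow> inv u \<otimes> (u \<otimes> y) = y"
  by (metis Units_closed Units_inv_closed Units_l_inv l_one m_assoc)

lemma ucancel2: "u \<in> Units R \<Longrightarrow> y \<in> carrier R \<Longrightarrow> u \<otimes> (inv u \<otimes> y) = y"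
  by (metis Units_closed Units_inv_closed Units_r_inv l_one m_assoc)

lemma unit_sandwich:
  assumes L: "L \<in> Units R" and U: "U \<in> Units R" and G: "G \<in> Units R" and x: "x \<in> carrier R"
    and e: "L \<otimes> x \<otimes> U = G"
  shows "x \<in> Units R"
proof -
  have LC: "L \<in> carrier R" "inv L \<in> carrier R" and UC: "U \<in> carrier R" "inv U \<in> carrier R"
    using L U by auto
  have "inv L \<otimes> (L \<otimes> x \<otimes> U) \<otimes> inv U = (inv L \<otimes> L) \<otimes> x \<otimes> (U \<otimes> inv U)"
    using LC UC x by (simp add: m_assoc)
  hence "x = inv L \<otimes> (L \<otimes> x \<otimes> U) \<otimes> inv U" using L U x by simp
  also have "\<dots> = inv L \<otimes> G \<otimes> inv U" using e by simp
  finally show ?thesis using L U G by simp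
qed

lemma unit_linv: "u \<in> Units R \<Longrightarrow> linv u"
  unfolding linv_def by (intro bexI[of _ "inv u"]) auto

end

locale m2J = m2ctx + locring R +
  assumes sJ: "s \<in> jacobson R"
begin

sublocale T: ring "M2 R s" by (rule ringT)

lemma M2_neg: "a \<in> carrier R \<Longrightarrow> b \<in> carrier R \<Longrightarrow> c \<in> carrier R \<Longrightarrow> d \<in> carrier R \<Longrightarrow>
  \<ominus>\<^bsub>M2 R s\<^esub> (a, b, c, d) = (\<ominus> a, \<ominus> b, \<ominus> c, \<ominus> d)"
  by (rule T.minus_equality) (auto simp: l_neg)

lemma M2_minus: "a \<in> carrier R \<Longrightarrow> b \<in> carrier R \<Longrightarrow> c \<in> carrier R \<Longrightarrow> d \<in> carrier R \<Longrightarrow>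
  a' \<in> carrier R \<Longrightarrow> b' \<in> carrier R \<Longrightarrow> c' \<in> carrier R \<Longrightarrow> d' \<in> carrier R \<Longrightarrow>
  (a, b, c, d) \<ominus>\<^bsub>M2 R s\<^esub> (a', b', c', d') = (a \<ominus> a', b \<ominus> b', c \<ominus> c', d \<ominus> d')"
  unfolding a_minus_def[of "M2 R s"] a_minus_def[of R] by (simp add: M2_neg)

lemma sJ2: "x \<in> carrier R \<Longrightarrow> s \<otimes> s \<otimes> x \<in> jacobson R"
  using sJ by (intro jac_rmult) auto

lemma sJ2': "x \<in> carrier R \<Longrightarrow> y \<in> carrier R \<Longrightarrow> s \<otimes> s \<otimes> x \<otimes> y \<in> jacobson R"
  by (rule jac_rmult[OF sJ2]) auto

lemma M2_unit:
  assumes a: "a \<in> Units R" and d: "d \<in> Units R" and b: "b \<in> carrier R" and c: "c \<in> carrier R"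
  shows "(a, b, c, d) \<in> Units (M2 R s)"
proof -
  have aC: "a \<in> carrier R" "inv a \<in> carrier R" and dC: "d \<in> carrier R" using a d by auto
  define l where "l = \<ominus> (c \<otimes> inv a)"
  define m where "m = \<ominus> (inv a \<otimes> b)"
  define del where "del = d \<ominus> s \<otimes> s \<otimes> c \<otimes> inv a \<otimes> b"
  have lC: "l \<in> carrier R" and mC: "m \<in> carrier R" and delC: "del \<in> carrier R"
    unfolding l_def m_def del_def using aC b c dC by auto
  have delU: "del \<in> Units R" unfolding del_def a_minus_def
    by (rule unit_plus_jac[OF d jac_neg[OF jac_rmult[OF sJ2'[OF c aC(2)] b]]])
  have LU: "(\<one>, \<zero>, l, \<one>) \<in> Units (M2 R s)"
    by (rule T.unitsI2[of _ "(\<one>, \<zero>, \<ominus> l, \<one>)"]) (use lC in \<open>auto simp: r_neg l_neg\<close>)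
  have UU: "(\<one>, m, \<zero>, \<one>) \<in> Units (M2 R s)"
    by (rule T.unitsI2[of _ "(\<one>, \<ominus> m, \<zero>, \<one>)"]) (use mC in \<open>auto simp: r_neg l_neg\<close>)
  have GU: "(a, \<zero>, \<zero>, del) \<in> Units (M2 R s)"
    by (rule T.unitsI2[of _ "(inv a, \<zero>, \<zero>, inv del)"]) (use aC a delU delC in auto)
  have e1: "(\<one>, \<zero>, l, \<one>) \<otimes>\<^bsub>M2 R s\<^esub> (a, b, c, d) = (a, b, \<zero>, del)"
  proof -
    have "l \<otimes> a \<oplus> c = \<zero>" unfolding l_def using aC c a
      by (simp add: l_minus m_assoc l_neg)
    moreover have "s \<otimes> s \<otimes> l \<otimes> b \<oplus> d = del" unfolding l_def del_def using aC c b dC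
      by (simp add: l_minus r_minus m_assoc a_minus_def a_comm)
    ultimately show ?thesis using aC b c dC lC by simp
  qed
  have e2: "(a, b, \<zero>, del) \<otimes>\<^bsub>M2 R s\<^esub> (\<one>, m, \<zero>, \<one>) = (a, \<zero>, \<zero>, del)"
  proof -
    have "a \<otimes> m \<oplus> b = \<zero>" unfolding m_def using aC b a
      by (simp add: r_minus m_assoc[symmetric] l_neg)
    thus ?thesis using aC b delC mC by simp
  qed
  show ?thesis
    by (rule T.unit_sandwich[OF LU UU GU]) (use aC b c dC e1 e2 in simp_all)
qed


lemma M2_jacI:
  assumes a: "a \<in> jacobson R" and d: "d \<in> jacobson R" and b: "b \<in> carrier R" and c: "c \<in> carrier R"
  shows "(a, b, c, d) \<in> jacobson (M2 R s)"
proof (rule T.jacI)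
  have aC: "a \<in> carrier R" and dC: "d \<in> carrier R" using a d jac_carrier by auto
  show "(a, b, c, d) \<in> carrier (M2 R s)" using aC b c dC by simp
  fix Y assume Y: "Y \<in> carrier (M2 R s)"
  obtain y1 y2 y3 y4 where Ye: "Y = (y1, y2, y3, y4)" "y1 \<in> carrier R" "y2 \<in> carrier R"
    "y3 \<in> carrier R" "y4 \<in> carrier R" using M2_ex[OF Y] by blast
  have p: "y1 \<otimes> a \<oplus> s \<otimes> s \<otimes> y2 \<otimes> c \<in> jacobson R"
    using jac_add[OF jac_lmult[OF Ye(2) a] sJ2'[OF Ye(3) c]] .
  have t: "s \<otimes> s \<otimes> y3 \<otimes> b \<oplus> y4 \<otimes> d \<in> jacobson R"
    using jac_add[OF sJ2'[OF Ye(4) b] jac_lmult[OF Ye(5) d]] .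
  have pC: "y1 \<otimes> a \<oplus> s \<otimes> s \<otimes> y2 \<otimes> c \<in> carrier R" and tC: "s \<otimes> s \<otimes> y3 \<otimes> b \<oplus> y4 \<otimes> d \<in> carrier R"
    using p t jac_carrier by auto
  have e: "\<one>\<^bsub>M2 R s\<^esub> \<ominus>\<^bsub>M2 R s\<^esub> Y \<otimes>\<^bsub>M2 R s\<^esub> (a, b, c, d) =
     (\<one> \<ominus> (y1 \<otimes> a \<oplus> s \<otimes> s \<otimes> y2 \<otimes> c), \<zero> \<ominus> (y1 \<otimes> b \<oplus> y2 \<otimes> d),
      \<zero> \<ominus> (y3 \<otimes> a \<oplus> y4 \<otimes> c), \<one> \<ominus> (s \<otimes> s \<otimes> y3 \<otimes> b \<oplus> y4 \<otimes> d))"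
    unfolding Ye(1) M2_one M2_mult using Ye aC b c dC by (subst M2_minus) auto
  have "(\<one> \<ominus> (y1 \<otimes> a \<oplus> s \<otimes> s \<otimes> y2 \<otimes> c), \<zero> \<ominus> (y1 \<otimes> b \<oplus> y2 \<otimes> d),
      \<zero> \<ominus> (y3 \<otimes> a \<oplus> y4 \<otimes> c), \<one> \<ominus> (s \<otimes> s \<otimes> y3 \<otimes> b \<oplus> y4 \<otimes> d)) \<in> Units (M2 R s)"
    by (rule M2_unit[OF jac_one_minus_unit[OF p] jac_one_minus_unit[OF t]]) (use Ye aC b c dC in auto)
  thus "T.linv (\<one>\<^bsub>M2 R s\<^esub> \<ominus>\<^bsub>M2 R s\<^esub> Y \<otimes>\<^bsub>M2 R s\<^esub> (a, b, c, d))"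
    unfolding e by (rule T.unit_linv)
qed

lemma M2_jacD:
  assumes X: "(a, b, c, d) \<in> jacobson (M2 R s)"
  shows "a \<in> jacobson R" "d \<in> jacobson R" "b \<in> carrier R" "c \<in> carrier R"
proof -
  have XC: "(a, b, c, d) \<in> carrier (M2 R s)" using X T.jac_carrier by blast
  hence C: "a \<in> carrier R" "b \<in> carrier R" "c \<in> carrier R" "d \<in> carrier R" by auto
  thus "b \<in> carrier R" "c \<in> carrier R" by auto
  show "a \<in> jacobson R"
  proof (rule ccontr)
    assume "a \<notin> jacobson R"
    hence u: "a \<in> Units R" using nonjac_unit C by blast
    have Y: "(inv a, \<zero>, \<zero>, \<zero>) \<in> carrier (M2 R s)" using u by simp
    have e: "\<one>\<^bsub>M2 R s\<^esub> \<ominus>\<^bsub>M2 R s\<^esub> (inv a, \<zero>, \<zero>, \<zero>) \<otimes>\<^bsub>M2 R s\<^esub> (a, b, c, d) =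
      (\<zero>, \<zero> \<ominus> inv a \<otimes> b, \<zero>, \<one>)"
    proof -
      have pr: "(inv a, \<zero>, \<zero>, \<zero>) \<otimes>\<^bsub>M2 R s\<^esub> (a, b, c, d) = (\<one>, inv a \<otimes> b, \<zero>, \<zero>)"
        using u C by simp
      show ?thesis unfolding pr M2_one by (subst M2_minus) (use u C in \<open>auto simp: a_minus_def r_neg\<close>)
    qed
    obtain Z where Z: "Z \<in> carrier (M2 R s)" "Z \<otimes>\<^bsub>M2 R s\<^esub> (\<zero>, \<zero> \<ominus> inv a \<otimes> b, \<zero>, \<one>) = \<one>\<^bsub>M2 R s\<^esub>"
      using T.jacD[OF X Y] unfolding e T.linv_def by blast
    obtain z1 z2 z3 z4 where Ze: "Z = (z1, z2, z3, z4)" "z1 \<in> carrier R" "z2 \<in> carrier R"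
      "z3 \<in> carrier R" "z4 \<in> carrier R" using M2_ex[OF Z(1)] by blast
    have h: "z1 \<otimes> \<zero> \<oplus> s \<otimes> s \<otimes> z2 \<otimes> \<zero> = \<one>"
      using arg_cong[OF Z(2), of fst] unfolding Ze(1) M2_mult M2_one fst_conv .
    have "z1 \<otimes> \<zero> \<oplus> s \<otimes> s \<otimes> z2 \<otimes> \<zero> = \<zero>" using Ze by simp
    thus False using one_ne_zero h by simp
  qed
  show "d \<in> jacobson R"
  proof (rule ccontr)
    assume "d \<notin> jacobson R"
    hence u: "d \<in> Units R" using nonjac_unit C by blast
    have Y: "(\<zero>, \<zero>, \<zero>, inv d) \<in> carrier (M2 R s)" using u by simp
    have e: "\<one>\<^bsub>M2 R s\<^esub> \<ominus>\<^bsub>M2 R s\<^esub> (\<zero>, \<zero>, \<zero>, inv d) \<otimes>\<^bsub>M2 R s\<^esub> (a, b, c, d) =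
      (\<one>, \<zero>, \<zero> \<ominus> inv d \<otimes> c, \<zero>)"
    proof -
      have pr: "(\<zero>, \<zero>, \<zero>, inv d) \<otimes>\<^bsub>M2 R s\<^esub> (a, b, c, d) = (\<zero>, \<zero>, inv d \<otimes> c, \<one>)"
        using u C by simp
      show ?thesis unfolding pr M2_one by (subst M2_minus) (use u C in \<open>auto simp: a_minus_def r_neg\<close>)
    qed
    obtain Z where Z: "Z \<in> carrier (M2 R s)" "Z \<otimes>\<^bsub>M2 R s\<^esub> (\<one>, \<zero>, \<zero> \<ominus> inv d \<otimes> c, \<zero>) = \<one>\<^bsub>M2 R s\<^esub>"
      using T.jacD[OF X Y] unfolding e T.linv_def by blast
    obtain z1 z2 z3 z4 where Ze: "Z = (z1, z2, z3, z4)" "z1 \<in> carrier R" "z2 \<in> carrier R"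
      "z3 \<in> carrier R" "z4 \<in> carrier R" using M2_ex[OF Z(1)] by blast
    have h: "s \<otimes> s \<otimes> z3 \<otimes> \<zero> \<oplus> z4 \<otimes> \<zero> = \<one>"
      using arg_cong[OF Z(2), of "\<lambda>x. snd (snd (snd x))"] unfolding Ze(1) M2_mult M2_one snd_conv .
    have "s \<otimes> s \<otimes> z3 \<otimes> \<zero> \<oplus> z4 \<otimes> \<zero> = \<zero>" using Ze by simp
    thus False using one_ne_zero h by simp
  qed
qed

lemma M2_jac_iff: "(a, b, c, d) \<in> jacobson (M2 R s) \<longleftrightarrow>
  a \<in> jacobson R \<and> d \<in> jacobson R \<and> b \<in> carrier R \<and> c \<in> carrier R"
proof
  assume "(a, b, c, d) \<in> jacobson (M2 R s)"
  from M2_jacD[OF this] show "a \<in> jacobson R \<and> d \<in> jacobson R \<and> b \<in> carrier R \<and> c \<in> carrier R"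
    by simp
next
  assume "a \<in> jacobson R \<and> d \<in> jacobson R \<and> b \<in> carrier R \<and> c \<in> carrier R"
  thus "(a, b, c, d) \<in> jacobson (M2 R s)" using M2_jacI by simp
qed

end



context ring begin

lemmas my_alg [algebra ring "ring.zero R" "ring.add R" "a_inv R" "a_minus R" "monoid.one R" "monoid.mult R"] = ring_simprules r_one

lemmas rsimp = r_distr l_distr a_minus_def r_minus l_minus m_assoc a_ac minus_add

lemma inv_mult_U: "P \<in> Units R \<Longrightarrow> Q \<in> Units R \<Longrightarrow> inv (P \<otimes> Q) = inv Q \<otimes> inv P"
proof (rule inv_eqI)
  assume P: "P \<in> Units R" and Q: "Q \<in> Units R"
  have C: "P \<in> carrier R" "inv P \<in> carrier R" "Q \<in> carrier R" "inv Q \<in> carrier R" using P Q by auto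
  show "P \<otimes> Q \<in> carrier R" "inv Q \<otimes> inv P \<in> carrier R" using C by auto
  have "P \<otimes> Q \<otimes> (inv Q \<otimes> inv P) = P \<otimes> (Q \<otimes> inv Q) \<otimes> inv P" using C by (simp add: m_assoc)
  thus "P \<otimes> Q \<otimes> (inv Q \<otimes> inv P) = \<one>" using P Q C by simp
  have "inv Q \<otimes> inv P \<otimes> (P \<otimes> Q) = inv Q \<otimes> (inv P \<otimes> P) \<otimes> Q" using C by (simp add: m_assoc)
  thus "inv Q \<otimes> inv P \<otimes> (P \<otimes> Q) = \<one>" using P Q C by simp
qed

lemma similar_trans:
  assumes "A \<in> carrier R" "similar R A B" "similar R B C" shows "similar R A C"
proof -
  obtain P where P: "P \<in> Units R" "B = inv P \<otimes> A \<otimes> P" using assms(2) unfolding similar_def by blast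
  obtain Q where Q: "Q \<in> Units R" "C = inv Q \<otimes> B \<otimes> Q" using assms(3) unfolding similar_def by blast
  have PQ: "P \<otimes> Q \<in> Units R" using P Q by simp
  show ?thesis unfolding similar_def
  proof (intro bexI[OF _ PQ])
    show "C = inv (P \<otimes> Q) \<otimes> A \<otimes> (P \<otimes> Q)"
      unfolding inv_mult_U[OF P(1) Q(1)] Q(2) P(2) using P Q assms(1) Units_closed[OF P(1)] Units_closed[OF Q(1)] by (simp add: m_assoc)
  qed
qed

lemma conj_mult:
  assumes P: "P \<in> Units R" and x: "x \<in> carrier R" and y: "y \<in> carrier R"
  shows "(P \<otimes> x \<otimes> inv P) \<otimes> (P \<otimes> y \<otimes> inv P) = P \<otimes> (x \<otimes> y) \<otimes> inv P"
proof -
  have C: "P \<in> carrier R" "inv P \<in> carrier R" using P by auto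
  have "(P \<otimes> x \<otimes> inv P) \<otimes> (P \<otimes> y \<otimes> inv P) = P \<otimes> x \<otimes> (inv P \<otimes> P) \<otimes> y \<otimes> inv P"
    using C x y by (simp add: m_assoc)
  also have "\<dots> = P \<otimes> (x \<otimes> y) \<otimes> inv P" using C x y P by (simp add: m_assoc)
  finally show ?thesis .
qed

lemma conj_minus:
  assumes P: "P \<in> Units R" and x: "x \<in> carrier R" and y: "y \<in> carrier R"
  shows "(P \<otimes> x \<otimes> inv P) \<ominus> (P \<otimes> y \<otimes> inv P) = P \<otimes> (x \<ominus> y) \<otimes> inv P"
proof -
  have C: "P \<in> carrier R" "inv P \<in> carrier R" using P by auto
  show ?thesis using C x y by (simp add: a_minus_def r_distr l_distr r_minus l_minus)
qed

lemma conj_back: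
  assumes P: "P \<in> Units R" and x: "x \<in> carrier R"
  shows "P \<otimes> (inv P \<otimes> x \<otimes> P) \<otimes> inv P = x"
proof -
  have C: "P \<in> carrier R" "inv P \<in> carrier R" using P by auto
  have "P \<otimes> (inv P \<otimes> x \<otimes> P) \<otimes> inv P = (P \<otimes> inv P) \<otimes> x \<otimes> (P \<otimes> inv P)"
    using C x by (simp add: m_assoc)
  thus ?thesis using P x by simp
qed

lemma sjc_similar:
  assumes A: "A \<in> carrier R" and sim: "similar R A B" and sj: "strongly_J_clean R B"
  shows "strongly_J_clean R A"
proof -
  obtain P where P: "P \<in> Units R" "B = inv P \<otimes> A \<otimes> P" using sim unfolding similar_def by blast
  have C: "P \<in> carrier R" "inv P \<in> carrier R" using P by auto
  have BC: "B \<in> carrier R" using P A C by simp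
  obtain e where e: "e \<in> carrier R" "e \<otimes> e = e" "B \<otimes> e = e \<otimes> B" "B \<ominus> e \<in> jacobson R"
    using sj unfolding strongly_J_clean_def by blast
  have Aeq: "A = P \<otimes> B \<otimes> inv P" using conj_back[OF P(1) A] P(2) by simp
  define f where "f = P \<otimes> e \<otimes> inv P"
  have fC: "f \<in> carrier R" unfolding f_def using C e by simp
  have "f \<otimes> f = f" unfolding f_def using conj_mult[OF P(1) e(1) e(1)] e(2) by simp
  moreover have "A \<otimes> f = f \<otimes> A" unfolding f_def Aeq
    using conj_mult[OF P(1) BC e(1)] conj_mult[OF P(1) e(1) BC] e(3) by simp
  moreover have "A \<ominus> f \<in> jacobson R"
  proof -
    have "A \<ominus> f = P \<otimes> (B \<ominus> e) \<otimes> inv P" unfolding f_def Aeq by (rule conj_minus[OF P(1) BC e(1)])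
    moreover have "P \<otimes> (B \<ominus> e) \<otimes> inv P \<in> jacobson R"
      by (rule jac_rmult[OF jac_lmult[OF C(1) e(4)] C(2)])
    ultimately show ?thesis by simp
  qed
  ultimately show ?thesis unfolding strongly_J_clean_def using fC by blast
qed

lemma idem_conj:
  assumes e: "e \<in> carrier R" "e \<otimes> e = e" and f: "f \<in> carrier R" "f \<otimes> f = f"
    and ef: "e \<ominus> f \<in> jacobson R"
  shows "\<exists>P\<in>Units R. inv P \<otimes> e \<otimes> P = f"
proof -
  define P where "P = e \<otimes> f \<oplus> (\<one> \<ominus> e) \<otimes> (\<one> \<ominus> f)"
  have PC: "P \<in> carrier R" unfolding P_def using e f by simp
  have "P = \<one> \<oplus> (e \<ominus> f) \<otimes> (f \<oplus> f \<ominus> \<one>)"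
  proof -
    have "\<one> \<oplus> (e \<ominus> f) \<otimes> (f \<oplus> f \<ominus> \<one>) = e \<otimes> f \<oplus> (\<one> \<ominus> e) \<otimes> (\<one> \<ominus> f) \<oplus> (f \<ominus> f \<otimes> f) \<oplus> (f \<ominus> f \<otimes> f)"
      using e(1) f(1) by algebra
    also have "\<dots> = P" unfolding P_def using e(1) f by (simp add: a_minus_def r_neg)
    finally show ?thesis by simp
  qed
  hence PU: "P \<in> Units R"
    using jac_one_plus_unit[OF jac_rmult[OF ef]] e f by simp
  have "e \<otimes> P = e \<otimes> f"
  proof -
    have "e \<otimes> P = (e \<otimes> e) \<otimes> f \<oplus> (e \<ominus> e \<otimes> e) \<otimes> (\<one> \<ominus> f)"
      unfolding P_def using e(1) f(1) by algebra
    thus ?thesis using e f by (simp add: a_minus_def r_neg)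
  qed
  moreover have "P \<otimes> f = e \<otimes> f"
  proof -
    have "P \<otimes> f = e \<otimes> (f \<otimes> f) \<oplus> (\<one> \<ominus> e) \<otimes> (f \<ominus> f \<otimes> f)"
      unfolding P_def using e(1) f(1) by algebra
    thus ?thesis using e f by (simp add: a_minus_def r_neg)
  qed
  ultimately have "e \<otimes> P = P \<otimes> f" by simp
  moreover have "inv P \<in> carrier R" using PU by simp
  ultimately have "inv P \<otimes> e \<otimes> P = inv P \<otimes> (P \<otimes> f)" using PC e f by (simp add: m_assoc)
  also have "\<dots> = f" using PU f by (simp add: ucancel1)
  finally show ?thesis using PU by blast
qed

lemma conj_comm:
  assumes P: "P \<in> Units R" and x: "x \<in> carrier R" and e: "e \<in> carrier R" and c: "x \<otimes> e = e \<otimes> x"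
  shows "(inv P \<otimes> x \<otimes> P) \<otimes> (inv P \<otimes> e \<otimes> P) = (inv P \<otimes> e \<otimes> P) \<otimes> (inv P \<otimes> x \<otimes> P)"
  using conj_mult[of "inv P" x e] conj_mult[of "inv P" e x] P x e c by simp

end



context ring begin

lemma minus0: "a \<in> carrier R \<Longrightarrow> b \<in> carrier R \<Longrightarrow> a \<ominus> b = \<zero> \<Longrightarrow> a = b"
  by (metis a_minus_def add.inv_solve_right l_zero minus_closed r_neg1 zero_closed minus_minus)

lemma sim_of_eq:
  assumes X: "X' \<in> Units R" and B: "B \<in> carrier R" and D: "D \<in> carrier R" and e: "B \<otimes> X' = X' \<otimes> D"
  shows "similar R D B" "similar R B D"
proof -
  have C: "X' \<in> carrier R" "inv X' \<in> carrier R" using X by auto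
  have "inv (inv X') \<otimes> D \<otimes> inv X' = X' \<otimes> D \<otimes> inv X'" using X by simp
  also have "\<dots> = B \<otimes> X' \<otimes> inv X'" using e by simp
  also have "\<dots> = B" using B C X by (simp add: m_assoc)
  finally show "similar R D B" unfolding similar_def using X by (intro bexI[of _ "inv X'"]) auto
  have "inv X' \<otimes> B \<otimes> X' = inv X' \<otimes> (X' \<otimes> D)" using e B C by (simp add: m_assoc)
  also have "\<dots> = D" using X D by (simp add: ucancel1)
  finally show "similar R B D" unfolding similar_def using X by (intro bexI[of _ X']) auto
qed

end

context m2J begin

lemma diag_sjc1:
  assumes a: "\<alpha> \<in> carrier R" "\<alpha> \<ominus> \<one> \<in> jacobson R" and b: "\<beta> \<in> jacobson R"
  shows "strongly_J_clean (M2 R s) (\<alpha>, \<zero>, \<zero>, \<beta>)"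
proof -
  have bC: "\<beta> \<in> carrier R" using b jac_carrier by auto
  have "(\<alpha>, \<zero>, \<zero>, \<beta>) \<ominus>\<^bsub>M2 R s\<^esub> (\<one>, \<zero>, \<zero>, \<zero>) = (\<alpha> \<ominus> \<one>, \<zero> \<ominus> \<zero>, \<zero> \<ominus> \<zero>, \<beta> \<ominus> \<zero>)"
    using a bC by (intro M2_minus) auto
  moreover have "(\<alpha> \<ominus> \<one>, \<zero> \<ominus> \<zero>, \<zero> \<ominus> \<zero>, \<beta> \<ominus> \<zero>) \<in> jacobson (M2 R s)"
    using a b bC by (intro M2_jacI) (auto simp: a_minus_def)
  ultimately show ?thesis unfolding strongly_J_clean_def using a bC
    by (intro bexI[of _ "(\<one>, \<zero>, \<zero>, \<zero>)"]) auto
qed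

lemma diag_sjc2:
  assumes a: "\<alpha> \<in> carrier R" "\<alpha> \<ominus> \<one> \<in> jacobson R" and b: "\<beta> \<in> jacobson R"
  shows "strongly_J_clean (M2 R s) (\<beta>, \<zero>, \<zero>, \<alpha>)"
proof -
  have bC: "\<beta> \<in> carrier R" using b jac_carrier by auto
  have "(\<beta>, \<zero>, \<zero>, \<alpha>) \<ominus>\<^bsub>M2 R s\<^esub> (\<zero>, \<zero>, \<zero>, \<one>) = (\<beta> \<ominus> \<zero>, \<zero> \<ominus> \<zero>, \<zero> \<ominus> \<zero>, \<alpha> \<ominus> \<one>)"
    using a bC by (intro M2_minus) auto
  moreover have "(\<beta> \<ominus> \<zero>, \<zero> \<ominus> \<zero>, \<zero> \<ominus> \<zero>, \<alpha> \<ominus> \<one>) \<in> jacobson (M2 R s)"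
    using a b bC by (intro M2_jacI) (auto simp: a_minus_def)
  ultimately show ?thesis unfolding strongly_J_clean_def using a bC
    by (intro bexI[of _ "(\<zero>, \<zero>, \<zero>, \<one>)"]) auto
qed

lemma eqs_prod:
  assumes C: "x \<in> carrier R" "y \<in> carrier R" "v \<in> carrier R" "p \<in> carrier R" "t \<in> carrier R"
    "d1 \<in> carrier R" "d2 \<in> carrier R"
    and e1: "x \<otimes> p \<oplus> s \<otimes> s = p \<otimes> d1" and e2: "v \<otimes> p \<oplus> y = d1"
    and e3: "x \<oplus> t = d2" and e4: "s \<otimes> s \<otimes> v \<oplus> y \<otimes> t = t \<otimes> d2"
  shows "(x, \<one>, v, y) \<otimes>\<^bsub>M2 R s\<^esub> (p, \<one>, \<one>, t) = (p, \<one>, \<one>, t) \<otimes>\<^bsub>M2 R s\<^esub> (d1, \<zero>, \<zero>, d2)"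
  using C e1 e2 e3 e4 by simp


lemma roots_of_eqs:
  assumes C: "x \<in> carrier R" "y \<in> carrier R" "p \<in> carrier R" "t \<in> carrier R"
    "d1 \<in> carrier R" "d2 \<in> carrier R" and v: "v \<in> Units R"
    and e1: "x \<otimes> p \<oplus> s \<otimes> s = p \<otimes> d1" and e2: "v \<otimes> p \<oplus> y = d1"
    and e3: "x \<oplus> t = d2" and e4: "s \<otimes> s \<otimes> v \<oplus> y \<otimes> t = t \<otimes> d2"
  shows "right_root R (v \<otimes> x \<otimes> inv v \<oplus> y) (v \<otimes> x \<otimes> inv v \<otimes> y \<ominus> s \<otimes> s \<otimes> v) d1"
    and "right_root R (x \<oplus> y) (y \<otimes> x \<ominus> s \<otimes> s \<otimes> v) d2"
proof -
  have vC: "v \<in> carrier R" "inv v \<in> carrier R" using v by auto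
  have ivv: "inv v \<otimes> v = \<one>" using v by simp
  have "d2 \<otimes> d2 \<ominus> (x \<oplus> y) \<otimes> d2 \<oplus> (y \<otimes> x \<ominus> s \<otimes> s \<otimes> v) = t \<otimes> (x \<oplus> t) \<ominus> (s \<otimes> s \<otimes> v \<oplus> y \<otimes> t)"
    unfolding e3[symmetric] using C vC sC by algebra
  also have "\<dots> = \<zero>" using e4 e3 C vC by (simp add: a_minus_def r_neg)
  finally show "right_root R (x \<oplus> y) (y \<otimes> x \<ominus> s \<otimes> s \<otimes> v) d2" unfolding right_root_def .
  have "d1 \<otimes> d1 \<ominus> (v \<otimes> x \<otimes> inv v \<oplus> y) \<otimes> d1 \<oplus> (v \<otimes> x \<otimes> inv v \<otimes> y \<ominus> s \<otimes> s \<otimes> v) =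
    v \<otimes> (p \<otimes> d1 \<ominus> (x \<otimes> p \<oplus> s \<otimes> s)) \<oplus> (v \<otimes> x \<otimes> p \<ominus> v \<otimes> x \<otimes> (inv v \<otimes> v) \<otimes> p)
     \<oplus> (v \<otimes> (s \<otimes> s) \<ominus> s \<otimes> s \<otimes> v)"
    unfolding e2[symmetric] using C vC sC by algebra
  also have "\<dots> = \<zero>"
  proof -
    have "p \<otimes> d1 \<ominus> (x \<otimes> p \<oplus> s \<otimes> s) = \<zero>" using e1 C by (simp add: a_minus_def r_neg)
    moreover have "v \<otimes> x \<otimes> p \<ominus> v \<otimes> x \<otimes> (inv v \<otimes> v) \<otimes> p = \<zero>" using ivv C vC by (simp add: a_minus_def r_neg)
    moreover have "v \<otimes> (s \<otimes> s) \<ominus> s \<otimes> s \<otimes> v = \<zero>" using C vC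
      by (simp add: a_minus_def r_neg sr[of v] m_assoc sl[of v])
    ultimately show ?thesis using vC by simp
  qed
  finally show "right_root R (v \<otimes> x \<otimes> inv v \<oplus> y) (v \<otimes> x \<otimes> inv v \<otimes> y \<ominus> s \<otimes> s \<otimes> v) d1"
    unfolding right_root_def .
qed

lemma eqs_of_roots:
  assumes C: "x \<in> carrier R" "y \<in> carrier R" "d1 \<in> carrier R" "d2 \<in> carrier R" and v: "v \<in> Units R"
    and r1: "right_root R (v \<otimes> x \<otimes> inv v \<oplus> y) (v \<otimes> x \<otimes> inv v \<otimes> y \<ominus> s \<otimes> s \<otimes> v) d1"
    and r2: "right_root R (x \<oplus> y) (y \<otimes> x \<ominus> s \<otimes> s \<otimes> v) d2"
  shows "x \<otimes> (inv v \<otimes> (d1 \<ominus> y)) \<oplus> s \<otimes> s = (inv v \<otimes> (d1 \<ominus> y)) \<otimes> d1"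
    and "v \<otimes> (inv v \<otimes> (d1 \<ominus> y)) \<oplus> y = d1"
    and "x \<oplus> (d2 \<ominus> x) = d2"
    and "s \<otimes> s \<otimes> v \<oplus> y \<otimes> (d2 \<ominus> x) = (d2 \<ominus> x) \<otimes> d2"
proof -
  have vC: "v \<in> carrier R" "inv v \<in> carrier R" using v by auto
  have ivv: "inv v \<otimes> v = \<one>" using v by simp
  show "v \<otimes> (inv v \<otimes> (d1 \<ominus> y)) \<oplus> y = d1" using v C by (simp add: ucancel2) algebra
  show "x \<oplus> (d2 \<ominus> x) = d2" using C by algebra
  have R2: "d2 \<otimes> d2 \<ominus> (x \<oplus> y) \<otimes> d2 \<oplus> (y \<otimes> x \<ominus> s \<otimes> s \<otimes> v) = \<zero>" using r2 unfolding right_root_def .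
  have "(d2 \<ominus> x) \<otimes> d2 \<ominus> (s \<otimes> s \<otimes> v \<oplus> y \<otimes> (d2 \<ominus> x)) =
     d2 \<otimes> d2 \<ominus> (x \<oplus> y) \<otimes> d2 \<oplus> (y \<otimes> x \<ominus> s \<otimes> s \<otimes> v)" using C vC sC by algebra
  hence "(d2 \<ominus> x) \<otimes> d2 \<ominus> (s \<otimes> s \<otimes> v \<oplus> y \<otimes> (d2 \<ominus> x)) = \<zero>" using R2 by simp
  thus "s \<otimes> s \<otimes> v \<oplus> y \<otimes> (d2 \<ominus> x) = (d2 \<ominus> x) \<otimes> d2" using C vC minus0 by (metis a_closed m_closed minus_closed sC)
  have R1: "d1 \<otimes> d1 \<ominus> (v \<otimes> x \<otimes> inv v \<oplus> y) \<otimes> d1 \<oplus> (v \<otimes> x \<otimes> inv v \<otimes> y \<ominus> s \<otimes> s \<otimes> v) = \<zero>"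
    using r1 unfolding right_root_def .
  have "(inv v \<otimes> (d1 \<ominus> y)) \<otimes> d1 \<ominus> (x \<otimes> (inv v \<otimes> (d1 \<ominus> y)) \<oplus> s \<otimes> s) =
     inv v \<otimes> (d1 \<otimes> d1 \<ominus> (v \<otimes> x \<otimes> inv v \<oplus> y) \<otimes> d1 \<oplus> (v \<otimes> x \<otimes> inv v \<otimes> y \<ominus> s \<otimes> s \<otimes> v))
     \<oplus> ((inv v \<otimes> v) \<otimes> x \<otimes> inv v \<otimes> d1 \<ominus> x \<otimes> inv v \<otimes> d1)
     \<oplus> (x \<otimes> inv v \<otimes> y \<ominus> (inv v \<otimes> v) \<otimes> x \<otimes> inv v \<otimes> y)
     \<oplus> (inv v \<otimes> (s \<otimes> s \<otimes> v) \<ominus> s \<otimes> s)" using C vC sC by algebra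
  also have "\<dots> = \<zero>"
  proof -
    have "inv v \<otimes> (s \<otimes> s \<otimes> v) = s \<otimes> s" using vC ivv by (simp add: m_assoc sl[of "inv v"])
    thus ?thesis using R1 ivv C vC by (simp add: a_minus_def r_neg)
  qed
  finally show "x \<otimes> (inv v \<otimes> (d1 \<ominus> y)) \<oplus> s \<otimes> s = (inv v \<otimes> (d1 \<ominus> y)) \<otimes> d1"
    using C vC minus0 by (metis a_closed m_closed minus_closed sC)
qed

end



context m2J begin

lemma form_to_diag:
  assumes C: "x \<in> carrier R" "y \<in> carrier R" "d1 \<in> carrier R" "d2 \<in> carrier R" and v: "v \<in> Units R"
    and r1: "right_root R (v \<otimes> x \<otimes> inv v \<oplus> y) (v \<otimes> x \<otimes> inv v \<otimes> y \<ominus> s \<otimes> s \<otimes> v) d1"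
    and r2: "right_root R (x \<oplus> y) (y \<otimes> x \<ominus> s \<otimes> s \<otimes> v) d2"
    and u1: "d1 \<ominus> y \<in> Units R" and u2: "d2 \<ominus> x \<in> Units R"
  shows "similar (M2 R s) (x, \<one>, v, y) (d1, \<zero>, \<zero>, d2)"
proof -
  define p where "p = inv v \<otimes> (d1 \<ominus> y)"
  have pU: "p \<in> Units R" unfolding p_def using v u1 by simp
  have vC: "v \<in> carrier R" using v by auto
  have pC: "p \<in> carrier R" and tC: "d2 \<ominus> x \<in> carrier R" using pU u2 by auto
  note E = eqs_of_roots[OF C v r1 r2, folded p_def]
  have XU: "(p, \<one>, \<one>, d2 \<ominus> x) \<in> Units (M2 R s)" by (rule M2_unit[OF pU u2]) auto
  have eq: "(x, \<one>, v, y) \<otimes>\<^bsub>M2 R s\<^esub> (p, \<one>, \<one>, d2 \<ominus> x) = (p, \<one>, \<one>, d2 \<ominus> x) \<otimes>\<^bsub>M2 R s\<^esub> (d1, \<zero>, \<zero>, d2)"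
    by (rule eqs_prod[OF C(1,2) vC pC tC C(3,4) E])
  show ?thesis by (rule T.sim_of_eq(2)[OF XU _ _ eq]) (use C vC in auto)
qed

lemma diag_to_form:
  assumes C: "d1 \<in> carrier R" "d2 \<in> carrier R" and g: "d1 \<ominus> d2 \<in> Units R"
    and xd: "x = d1 \<ominus> s \<otimes> s" and yd: "y = (d1 \<ominus> d2) \<otimes> (d2 \<oplus> s \<otimes> s) \<otimes> inv (d1 \<ominus> d2)"
    and vd: "v = d1 \<ominus> y"
    and v: "v \<in> Units R"
    and t: "d2 \<ominus> d1 \<oplus> s \<otimes> s \<in> Units R"
  shows "similar (M2 R s) (d1, \<zero>, \<zero>, d2) (x, \<one>, v, y)"
   and "right_root R (v \<otimes> x \<otimes> inv v \<oplus> y) (v \<otimes> x \<otimes> inv v \<otimes> y \<ominus> s \<otimes> s \<otimes> v) d1"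
   and "right_root R (x \<oplus> y) (y \<otimes> x \<ominus> s \<otimes> s \<otimes> v) d2"
proof -
  define g' where "g' = d1 \<ominus> d2"
  define w0 where "w0 = d2 \<oplus> s \<otimes> s"
  have y_def: "y = g' \<otimes> w0 \<otimes> inv g'" unfolding yd g'_def w0_def ..
  define t' where "t' = d2 \<ominus> d1 \<oplus> s \<otimes> s"
  have gC: "g' \<in> carrier R" "inv g' \<in> carrier R" unfolding g'_def using g by auto
  have w0C: "w0 \<in> carrier R" unfolding w0_def using C by simp
  have yC: "y \<in> carrier R" unfolding y_def using gC w0C by simp
  have tC: "t' \<in> carrier R" unfolding t'_def using C by simp
  have igg: "inv g' \<otimes> g' = \<one>" unfolding g'_def using g by simp
  have xC: "d1 \<ominus> s \<otimes> s \<in> carrier R" using C by simp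
  have vC: "d1 \<ominus> y \<in> carrier R" using C yC by simp
  have e1: "(d1 \<ominus> s \<otimes> s) \<otimes> \<one> \<oplus> s \<otimes> s = \<one> \<otimes> d1" using sC C by algebra
  have e2: "(d1 \<ominus> y) \<otimes> \<one> \<oplus> y = d1" using sC C yC by algebra
  have e3: "(d1 \<ominus> s \<otimes> s) \<oplus> t' = d2" unfolding t'_def using sC C by algebra
  have e4: "s \<otimes> s \<otimes> (d1 \<ominus> y) \<oplus> y \<otimes> t' = t' \<otimes> d2"
  proof -
    have tt: "t' = s \<otimes> s \<ominus> g'" unfolding t'_def g'_def using sC C by algebra
    have ys: "y \<otimes> (s \<otimes> s) = s \<otimes> s \<otimes> y" using yC by (simp add: m_assoc sr[of y] sl[of y])
    have yg: "y \<otimes> g' = g' \<otimes> w0" unfolding y_def using gC w0C igg by (simp add: m_assoc)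
    have yt: "y \<otimes> t' = s \<otimes> s \<otimes> y \<ominus> g' \<otimes> w0" unfolding tt using yC gC ys yg
      by (simp add: a_minus_def r_distr r_minus)
    have "s \<otimes> s \<otimes> (d1 \<ominus> y) \<oplus> (s \<otimes> s \<otimes> y \<ominus> g' \<otimes> w0) \<ominus> t' \<otimes> d2 =
       (s \<otimes> s \<otimes> d1 \<ominus> d1 \<otimes> (s \<otimes> s)) \<oplus> (d2 \<otimes> (s \<otimes> s) \<ominus> s \<otimes> s \<otimes> d2)"
      unfolding g'_def w0_def t'_def using sC C yC by algebra
    also have "\<dots> = \<zero>" using C by (simp add: a_minus_def r_neg m_assoc sr[of d1] sr[of d2] sl[of d1] sl[of d2])
    finally show ?thesis unfolding yt using minus0 C yC gC w0C tC
      by (metis a_closed m_closed minus_closed sC)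
  qed
  have tU: "t' \<in> Units R" unfolding t'_def using t .
  have vU: "d1 \<ominus> y \<in> Units R" using v vd by simp
  have XU: "(\<one>, \<one>, \<one>, t') \<in> Units (M2 R s)" by (rule M2_unit[OF _ tU]) auto
  have eq: "(d1 \<ominus> s \<otimes> s, \<one>, d1 \<ominus> y, y) \<otimes>\<^bsub>M2 R s\<^esub> (\<one>, \<one>, \<one>, t') = (\<one>, \<one>, \<one>, t') \<otimes>\<^bsub>M2 R s\<^esub> (d1, \<zero>, \<zero>, d2)"
    by (rule eqs_prod[OF xC yC vC one_closed tC C e1 e2 e3 e4])
  show "similar (M2 R s) (d1, \<zero>, \<zero>, d2) (x, \<one>, v, y)" unfolding xd vd
    by (rule T.sim_of_eq(1)[OF XU _ _ eq]) (use C xC yC vC in auto)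
  note RR = roots_of_eqs[OF xC yC one_closed tC C vU e1 e2 e3 e4]
  show "right_root R (v \<otimes> x \<otimes> inv v \<oplus> y) (v \<otimes> x \<otimes> inv v \<otimes> y \<ominus> s \<otimes> s \<otimes> v) d1"
    using RR(1) unfolding xd vd .
  show "right_root R (x \<oplus> y) (y \<otimes> x \<ominus> s \<otimes> s \<otimes> v) d2"
    using RR(2) unfolding xd vd .
qed

end



context ring begin

lemma neg_unit: assumes u: "u \<in> Units R" shows "\<ominus> u \<in> Units R"
proof -
  have C: "u \<in> carrier R" "inv u \<in> carrier R" using u by auto
  show ?thesis by (rule unitsI2[of _ "\<ominus> (inv u)"]) (use u C in \<open>auto simp: l_minus r_minus\<close>)
qed

lemma neg_one_unit: "\<ominus> \<one> \<in> Units R"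
  using neg_unit[of \<one>] by simp

lemma diff_unit1:
  assumes a: "a \<in> carrier R" "a \<ominus> \<one> \<in> jacobson R" and b: "b \<in> jacobson R"
  shows "a \<ominus> b \<in> Units R" "b \<ominus> a \<in> Units R"
proof -
  have bC: "b \<in> carrier R" using b jac_carrier by auto
  have "a \<ominus> b = \<one> \<oplus> ((a \<ominus> \<one>) \<ominus> b)" using a bC by algebra
  thus ab: "a \<ominus> b \<in> Units R" using jac_one_plus_unit[OF jac_minus[OF a(2) b]] by simp
  have "b \<ominus> a = \<ominus> (a \<ominus> b)" using a bC by algebra
  thus "b \<ominus> a \<in> Units R" using neg_unit[OF ab] by simp
qed

end

context m2J begin

lemma ssJ: "s \<otimes> s \<in> jacobson R"
  by (rule jac_rmult[OF sJ sC])

lemma case3_form: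
  assumes a: "\<alpha> \<in> carrier R" "\<alpha> \<ominus> \<one> \<in> jacobson R" and b: "\<beta> \<in> jacobson R"
  shows "\<exists>u v w. u \<in> one_plus_J R \<and> v \<in> Units R \<and> w \<in> jacobson R \<and>
       similar (M2 R s) (\<alpha>, \<zero>, \<zero>, \<beta>) (u, \<one>, v, w) \<and>
       (\<exists>t \<in> one_plus_J R. right_root R
          (v \<otimes> u \<otimes> inv v \<oplus> w) (v \<otimes> u \<otimes> inv v \<otimes> w \<ominus> s \<otimes> s \<otimes> v) t) \<and>
       (\<exists>t \<in> jacobson R. right_root R (u \<oplus> w) (w \<otimes> u \<ominus> s \<otimes> s \<otimes> v) t)"
proof -
  have bC: "\<beta> \<in> carrier R" using b jac_carrier by auto
  define g where "g = \<alpha> \<ominus> \<beta>"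
  have gU: "g \<in> Units R" unfolding g_def using diff_unit1[OF a b] by simp
  have gC: "g \<in> carrier R" "inv g \<in> carrier R" using gU by auto
  define u where "u = \<alpha> \<ominus> s \<otimes> s"
  define w where "w = g \<otimes> (\<beta> \<oplus> s \<otimes> s) \<otimes> inv g"
  define v where "v = \<alpha> \<ominus> w"
  have wJ: "w \<in> jacobson R" unfolding w_def
    by (rule jac_rmult[OF jac_lmult[OF gC(1) jac_add[OF b ssJ]] gC(2)])
  have wC: "w \<in> carrier R" using wJ jac_carrier by auto
  have "u \<ominus> \<one> = (\<alpha> \<ominus> \<one>) \<ominus> s \<otimes> s" unfolding u_def using a sC by algebra
  hence uJ: "u \<in> one_plus_J R" unfolding one_plus_J_iff u_def using a jac_minus[OF a(2) ssJ] by simp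
  have vU: "v \<in> Units R" unfolding v_def by (rule diff_unit1(1)[OF a wJ])
  have tU: "\<beta> \<ominus> \<alpha> \<oplus> s \<otimes> s \<in> Units R"
    using unit_plus_jac[OF diff_unit1(2)[OF a b] ssJ] .
  note D = diag_to_form[OF a(1) bC gU[unfolded g_def] u_def w_def[unfolded g_def] v_def vU tU]
  have "\<alpha> \<in> one_plus_J R" using a one_plus_J_iff by simp
  thus ?thesis using uJ vU wJ D b by blast
qed

lemma case4_form:
  assumes a: "\<alpha> \<in> carrier R" "\<alpha> \<ominus> \<one> \<in> jacobson R" and b: "\<beta> \<in> jacobson R"
  shows "\<exists>u v w. u \<in> one_plus_J R \<and> v \<in> Units R \<and> w \<in> jacobson R \<and>
       similar (M2 R s) (\<beta>, \<zero>, \<zero>, \<alpha>) (w, \<one>, v, u) \<and>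
       (\<exists>t \<in> jacobson R. right_root R
          (u \<oplus> v \<otimes> w \<otimes> inv v) (v \<otimes> w \<otimes> inv v \<otimes> u \<ominus> s \<otimes> s \<otimes> v) t) \<and>
       (\<exists>t \<in> one_plus_J R. right_root R (u \<oplus> w) (u \<otimes> w \<ominus> s \<otimes> s \<otimes> v) t)"
proof -
  have bC: "\<beta> \<in> carrier R" using b jac_carrier by auto
  define g where "g = \<beta> \<ominus> \<alpha>"
  have gU: "g \<in> Units R" unfolding g_def using diff_unit1[OF a b] by simp
  have gC: "g \<in> carrier R" "inv g \<in> carrier R" using gU by auto
  define w where "w = \<beta> \<ominus> s \<otimes> s"
  define u where "u = g \<otimes> (\<alpha> \<oplus> s \<otimes> s) \<otimes> inv g"
  define v where "v = \<beta> \<ominus> u"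
  have wJ: "w \<in> jacobson R" unfolding w_def by (rule jac_minus[OF b ssJ])
  have uC: "u \<in> carrier R" unfolding u_def using gC a by simp
  have "u \<ominus> \<one> = g \<otimes> ((\<alpha> \<ominus> \<one>) \<oplus> s \<otimes> s) \<otimes> inv g"
  proof -
    have "g \<otimes> ((\<alpha> \<ominus> \<one>) \<oplus> s \<otimes> s) \<otimes> inv g = u \<ominus> g \<otimes> inv g" unfolding u_def
      using gC a sC by algebra
    thus ?thesis using gU by simp
  qed
  hence u1: "u \<ominus> \<one> \<in> jacobson R"
    using jac_rmult[OF jac_lmult[OF gC(1) jac_add[OF a(2) ssJ]] gC(2)] by simp
  hence uJ: "u \<in> one_plus_J R" unfolding one_plus_J_iff using uC by simp
  have vU: "v \<in> Units R" unfolding v_def by (rule diff_unit1(2)[OF uC u1 b])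
  have tU: "\<alpha> \<ominus> \<beta> \<oplus> s \<otimes> s \<in> Units R"
    using unit_plus_jac[OF diff_unit1(1)[OF a b] ssJ] .
  note D = diag_to_form[OF bC a(1) gU[unfolded g_def] w_def u_def[unfolded g_def] v_def vU tU]
  have vC: "v \<in> carrier R" using vU by auto
  have wC: "w \<in> carrier R" using wJ jac_carrier by auto
  have r1: "right_root R (u \<oplus> v \<otimes> w \<otimes> inv v) (v \<otimes> w \<otimes> inv v \<otimes> u \<ominus> s \<otimes> s \<otimes> v) \<beta>"
  proof -
    have eq: "v \<otimes> w \<otimes> inv v \<oplus> u = u \<oplus> v \<otimes> w \<otimes> inv v" by (rule a_comm) (use vU uC wC in auto)
    show ?thesis using D(2) eq by metis
  qed
  have r2: "right_root R (u \<oplus> w) (u \<otimes> w \<ominus> s \<otimes> s \<otimes> v) \<alpha>"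
  proof -
    have eq: "w \<oplus> u = u \<oplus> w" using uC wC by (simp add: a_comm)
    show ?thesis using D(3) eq by metis
  qed
  have "\<alpha> \<in> one_plus_J R" using a one_plus_J_iff by simp
  thus ?thesis using uJ vU wJ D(1) r1 r2 b by blast
qed

lemma case3_sjc:
  assumes u: "u \<in> one_plus_J R" and v: "v \<in> Units R" and w: "w \<in> jacobson R"
    and t1: "t1 \<in> one_plus_J R" "right_root R (v \<otimes> u \<otimes> inv v \<oplus> w) (v \<otimes> u \<otimes> inv v \<otimes> w \<ominus> s \<otimes> s \<otimes> v) t1"
    and t2: "t2 \<in> jacobson R" "right_root R (u \<oplus> w) (w \<otimes> u \<ominus> s \<otimes> s \<otimes> v) t2"
  shows "strongly_J_clean (M2 R s) (u, \<one>, v, w)"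
proof -
  have uC: "u \<in> carrier R" "u \<ominus> \<one> \<in> jacobson R" using u one_plus_J_iff by auto
  have t1C: "t1 \<in> carrier R" "t1 \<ominus> \<one> \<in> jacobson R" using t1 one_plus_J_iff by auto
  have wC: "w \<in> carrier R" and t2C: "t2 \<in> carrier R" using w t2 jac_carrier by auto
  have vC: "v \<in> carrier R" using v by auto
  have sim: "similar (M2 R s) (u, \<one>, v, w) (t1, \<zero>, \<zero>, t2)"
    by (rule form_to_diag[OF uC(1) wC t1C(1) t2C v t1(2) t2(2) diff_unit1(1)[OF t1C w] diff_unit1(2)[OF uC t2(1)]])
  show ?thesis by (rule T.sjc_similar[OF _ sim diag_sjc1[OF t1C t2(1)]]) (use uC wC vC in simp)
qed

lemma case4_sjc:
  assumes u: "u \<in> one_plus_J R" and v: "v \<in> Units R" and w: "w \<in> jacobson R"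
    and t1: "t1 \<in> jacobson R" "right_root R (u \<oplus> v \<otimes> w \<otimes> inv v) (v \<otimes> w \<otimes> inv v \<otimes> u \<ominus> s \<otimes> s \<otimes> v) t1"
    and t2: "t2 \<in> one_plus_J R" "right_root R (u \<oplus> w) (u \<otimes> w \<ominus> s \<otimes> s \<otimes> v) t2"
  shows "strongly_J_clean (M2 R s) (w, \<one>, v, u)"
proof -
  have uC: "u \<in> carrier R" "u \<ominus> \<one> \<in> jacobson R" using u one_plus_J_iff by auto
  have t2C: "t2 \<in> carrier R" "t2 \<ominus> \<one> \<in> jacobson R" using t2 one_plus_J_iff by auto
  have wC: "w \<in> carrier R" and t1C: "t1 \<in> carrier R" using w t1 jac_carrier by auto
  have vC: "v \<in> carrier R" using v by auto
  have r1: "right_root R (v \<otimes> w \<otimes> inv v \<oplus> u) (v \<otimes> w \<otimes> inv v \<otimes> u \<ominus> s \<otimes> s \<otimes> v) t1"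
  proof -
    have eq: "v \<otimes> w \<otimes> inv v \<oplus> u = u \<oplus> v \<otimes> w \<otimes> inv v" by (rule a_comm) (use v uC wC in auto)
    show ?thesis using t1(2) eq by metis
  qed
  have r2: "right_root R (w \<oplus> u) (u \<otimes> w \<ominus> s \<otimes> s \<otimes> v) t2"
  proof -
    have eq: "w \<oplus> u = u \<oplus> w" using uC wC by (simp add: a_comm)
    show ?thesis using t2(2) eq by metis
  qed
  have sim: "similar (M2 R s) (w, \<one>, v, u) (t1, \<zero>, \<zero>, t2)"
    by (rule form_to_diag[OF wC uC(1) t1C t2C(1) v r1 r2 diff_unit1(2)[OF uC t1(1)] diff_unit1(1)[OF t2C w]])
  show ?thesis by (rule T.sjc_similar[OF _ sim diag_sjc2[OF t2C t1(1)]]) (use uC wC vC in simp)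
qed

end



context m2J begin

lemma idem_entries:
  assumes C: "e1 \<in> carrier R" "e2 \<in> carrier R" "e3 \<in> carrier R" "e4 \<in> carrier R"
    and idem: "(e1, e2, e3, e4) \<otimes>\<^bsub>M2 R s\<^esub> (e1, e2, e3, e4) = (e1, e2, e3, e4)"
  shows "e1 \<otimes> e1 \<ominus> e1 \<in> jacobson R" "e4 \<otimes> e4 \<ominus> e4 \<in> jacobson R"
proof -
  have h1: "e1 \<otimes> e1 \<oplus> s \<otimes> s \<otimes> e2 \<otimes> e3 = e1" and h4: "s \<otimes> s \<otimes> e3 \<otimes> e2 \<oplus> e4 \<otimes> e4 = e4"
    using idem by simp_all
  have "e1 \<otimes> e1 \<ominus> e1 = e1 \<otimes> e1 \<ominus> (e1 \<otimes> e1 \<oplus> s \<otimes> s \<otimes> e2 \<otimes> e3)" using h1 by simp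
  also have "\<dots> = \<ominus> (s \<otimes> s \<otimes> e2 \<otimes> e3)" using C sC by algebra
  finally show "e1 \<otimes> e1 \<ominus> e1 \<in> jacobson R" using jac_neg[OF sJ2'[OF C(2,3)]] by simp
  have "e4 \<otimes> e4 \<ominus> e4 = e4 \<otimes> e4 \<ominus> (s \<otimes> s \<otimes> e3 \<otimes> e2 \<oplus> e4 \<otimes> e4)" using h4 by simp
  also have "\<dots> = \<ominus> (s \<otimes> s \<otimes> e3 \<otimes> e2)" using C sC by algebra
  finally show "e4 \<otimes> e4 \<ominus> e4 \<in> jacobson R" using jac_neg[OF sJ2'[OF C(3,2)]] by simp
qed

lemma main_fwd:
  assumes A: "A \<in> carrier (M2 R s)" and sj: "strongly_J_clean (M2 R s) A"
  shows "A \<in> jacobson (M2 R s) \<or>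
    \<one>\<^bsub>M2 R s\<^esub> \<ominus>\<^bsub>M2 R s\<^esub> A \<in> jacobson (M2 R s) \<or>
    (\<exists>u v w. u \<in> one_plus_J R \<and> v \<in> Units R \<and> w \<in> jacobson R \<and>
       similar (M2 R s) A (u, \<one>, v, w) \<and>
       (\<exists>t \<in> one_plus_J R. right_root R
          (v \<otimes> u \<otimes> inv v \<oplus> w) (v \<otimes> u \<otimes> inv v \<otimes> w \<ominus> s \<otimes> s \<otimes> v) t) \<and>
       (\<exists>t \<in> jacobson R. right_root R (u \<oplus> w) (w \<otimes> u \<ominus> s \<otimes> s \<otimes> v) t)) \<or>
    (\<exists>u v w. u \<in> one_plus_J R \<and> v \<in> Units R \<and> w \<in> jacobson R \<and>
       similar (M2 R s) A (w, \<one>, v, u) \<and>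
       (\<exists>t \<in> jacobson R. right_root R
          (u \<oplus> v \<otimes> w \<otimes> inv v) (v \<otimes> w \<otimes> inv v \<otimes> u \<ominus> s \<otimes> s \<otimes> v) t) \<and>
       (\<exists>t \<in> one_plus_J R. right_root R (u \<oplus> w) (u \<otimes> w \<ominus> s \<otimes> s \<otimes> v) t))"
proof -
  obtain e where e: "e \<in> carrier (M2 R s)" "e \<otimes>\<^bsub>M2 R s\<^esub> e = e"
    "A \<otimes>\<^bsub>M2 R s\<^esub> e = e \<otimes>\<^bsub>M2 R s\<^esub> A" "A \<ominus>\<^bsub>M2 R s\<^esub> e \<in> jacobson (M2 R s)"
    using sj unfolding strongly_J_clean_def by blast
  obtain e1 e2 e3 e4 where E: "e = (e1, e2, e3, e4)" "e1 \<in> carrier R" "e2 \<in> carrier R"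
    "e3 \<in> carrier R" "e4 \<in> carrier R" using M2_ex[OF e(1)] by blast
  note ie = idem_entries[OF E(2-5) e(2)[unfolded E(1)]]
  have c1: "e1 \<in> jacobson R \<or> e1 \<ominus> \<one> \<in> jacobson R" by (rule idem_cases[OF E(2) ie(1)])
  have c4: "e4 \<in> jacobson R \<or> e4 \<ominus> \<one> \<in> jacobson R" by (rule idem_cases[OF E(5) ie(2)])
  have key: "\<And>f. f \<in> carrier (M2 R s) \<Longrightarrow> f \<otimes>\<^bsub>M2 R s\<^esub> f = f \<Longrightarrow> e \<ominus>\<^bsub>M2 R s\<^esub> f \<in> jacobson (M2 R s) \<Longrightarrow>
     \<exists>P\<in>Units (M2 R s). similar (M2 R s) A (inv\<^bsub>M2 R s\<^esub> P \<otimes>\<^bsub>M2 R s\<^esub> A \<otimes>\<^bsub>M2 R s\<^esub> P) \<and>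
       (inv\<^bsub>M2 R s\<^esub> P \<otimes>\<^bsub>M2 R s\<^esub> A \<otimes>\<^bsub>M2 R s\<^esub> P) \<otimes>\<^bsub>M2 R s\<^esub> f = f \<otimes>\<^bsub>M2 R s\<^esub> (inv\<^bsub>M2 R s\<^esub> P \<otimes>\<^bsub>M2 R s\<^esub> A \<otimes>\<^bsub>M2 R s\<^esub> P) \<and>
       (inv\<^bsub>M2 R s\<^esub> P \<otimes>\<^bsub>M2 R s\<^esub> A \<otimes>\<^bsub>M2 R s\<^esub> P) \<ominus>\<^bsub>M2 R s\<^esub> f \<in> jacobson (M2 R s)"
  proof -
    fix f assume f: "f \<in> carrier (M2 R s)" "f \<otimes>\<^bsub>M2 R s\<^esub> f = f" "e \<ominus>\<^bsub>M2 R s\<^esub> f \<in> jacobson (M2 R s)"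
    obtain P where P: "P \<in> Units (M2 R s)" "inv\<^bsub>M2 R s\<^esub> P \<otimes>\<^bsub>M2 R s\<^esub> e \<otimes>\<^bsub>M2 R s\<^esub> P = f"
      using T.idem_conj[OF e(1,2) f] by blast
    have PC: "P \<in> carrier (M2 R s)" "inv\<^bsub>M2 R s\<^esub> P \<in> carrier (M2 R s)" "inv\<^bsub>M2 R s\<^esub> P \<in> Units (M2 R s)"
      using P by auto
    have "similar (M2 R s) A (inv\<^bsub>M2 R s\<^esub> P \<otimes>\<^bsub>M2 R s\<^esub> A \<otimes>\<^bsub>M2 R s\<^esub> P)"
      unfolding similar_def using P by blast
    moreover have "(inv\<^bsub>M2 R s\<^esub> P \<otimes>\<^bsub>M2 R s\<^esub> A \<otimes>\<^bsub>M2 R s\<^esub> P) \<otimes>\<^bsub>M2 R s\<^esub> f = f \<otimes>\<^bsub>M2 R s\<^esub> (inv\<^bsub>M2 R s\<^esub> P \<otimes>\<^bsub>M2 R s\<^esub> A \<otimes>\<^bsub>M2 R s\<^esub> P)"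
      using T.conj_comm[OF P(1) A e(1) e(3)] P(2) by simp
    moreover have "(inv\<^bsub>M2 R s\<^esub> P \<otimes>\<^bsub>M2 R s\<^esub> A \<otimes>\<^bsub>M2 R s\<^esub> P) \<ominus>\<^bsub>M2 R s\<^esub> f = inv\<^bsub>M2 R s\<^esub> P \<otimes>\<^bsub>M2 R s\<^esub> (A \<ominus>\<^bsub>M2 R s\<^esub> e) \<otimes>\<^bsub>M2 R s\<^esub> P"
      using T.conj_minus[OF PC(3) A e(1)] P by simp
    moreover have "inv\<^bsub>M2 R s\<^esub> P \<otimes>\<^bsub>M2 R s\<^esub> (A \<ominus>\<^bsub>M2 R s\<^esub> e) \<otimes>\<^bsub>M2 R s\<^esub> P \<in> jacobson (M2 R s)"
      by (rule T.jac_rmult[OF T.jac_lmult[OF PC(2) e(4)] PC(1)])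
    ultimately show "?thesis f" using P by auto
  qed
  obtain a1 a2 a3 a4 where AA: "A = (a1, a2, a3, a4)" "a1 \<in> carrier R" "a2 \<in> carrier R"
    "a3 \<in> carrier R" "a4 \<in> carrier R" using M2_ex[OF A] by blast
  show ?thesis
  proof (cases "e1 \<in> jacobson R")
    case True note j1 = True
    show ?thesis
    proof (cases "e4 \<in> jacobson R")
      case True
      have eJ: "e \<in> jacobson (M2 R s)" unfolding E(1) using j1 True E by (intro M2_jacI) auto
      have "A = (A \<ominus>\<^bsub>M2 R s\<^esub> e) \<oplus>\<^bsub>M2 R s\<^esub> e" using A e(1) by algebra
      hence "A \<in> jacobson (M2 R s)" using T.jac_add[OF e(4) eJ] by simp
      thus ?thesis by simp
    next
      case False
      hence j4: "e4 \<ominus> \<one> \<in> jacobson R" using c4 by simp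
      have fC: "(\<zero>, \<zero>, \<zero>, \<one>) \<in> carrier (M2 R s)" by simp
      have ff: "(\<zero>, \<zero>, \<zero>, \<one>) \<otimes>\<^bsub>M2 R s\<^esub> (\<zero>, \<zero>, \<zero>, \<one>) = (\<zero>, \<zero>, \<zero>, \<one>)" by simp
      have "e \<ominus>\<^bsub>M2 R s\<^esub> (\<zero>, \<zero>, \<zero>, \<one>) = (e1 \<ominus> \<zero>, e2 \<ominus> \<zero>, e3 \<ominus> \<zero>, e4 \<ominus> \<one>)"
        unfolding E(1) using E by (intro M2_minus) auto
      moreover have "(e1 \<ominus> \<zero>, e2 \<ominus> \<zero>, e3 \<ominus> \<zero>, e4 \<ominus> \<one>) \<in> jacobson (M2 R s)"
        using j1 j4 E by (intro M2_jacI) (auto simp: a_minus_def)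
      ultimately obtain P where P: "P \<in> Units (M2 R s)"
        "similar (M2 R s) A (inv\<^bsub>M2 R s\<^esub> P \<otimes>\<^bsub>M2 R s\<^esub> A \<otimes>\<^bsub>M2 R s\<^esub> P)"
        "(inv\<^bsub>M2 R s\<^esub> P \<otimes>\<^bsub>M2 R s\<^esub> A \<otimes>\<^bsub>M2 R s\<^esub> P) \<otimes>\<^bsub>M2 R s\<^esub> (\<zero>, \<zero>, \<zero>, \<one>) = (\<zero>, \<zero>, \<zero>, \<one>) \<otimes>\<^bsub>M2 R s\<^esub> (inv\<^bsub>M2 R s\<^esub> P \<otimes>\<^bsub>M2 R s\<^esub> A \<otimes>\<^bsub>M2 R s\<^esub> P)"
        "(inv\<^bsub>M2 R s\<^esub> P \<otimes>\<^bsub>M2 R s\<^esub> A \<otimes>\<^bsub>M2 R s\<^esub> P) \<ominus>\<^bsub>M2 R s\<^esub> (\<zero>, \<zero>, \<zero>, \<one>) \<in> jacobson (M2 R s)"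
        using key[OF fC ff] by auto
      define A' where "A' = inv\<^bsub>M2 R s\<^esub> P \<otimes>\<^bsub>M2 R s\<^esub> A \<otimes>\<^bsub>M2 R s\<^esub> P"
      have A'C: "A' \<in> carrier (M2 R s)" unfolding A'_def using P A by auto
      obtain b1 b2 b3 b4 where B: "A' = (b1, b2, b3, b4)" "b1 \<in> carrier R" "b2 \<in> carrier R"
        "b3 \<in> carrier R" "b4 \<in> carrier R" using M2_ex[OF A'C] by blast
      have "(\<zero>, b2, \<zero>, b4) = (\<zero>, \<zero>, b3, b4)" using P(3)[folded A'_def] B by simp
      hence b23: "b2 = \<zero>" "b3 = \<zero>" by auto
      have "A' \<ominus>\<^bsub>M2 R s\<^esub> (\<zero>, \<zero>, \<zero>, \<one>) = (b1 \<ominus> \<zero>, b2 \<ominus> \<zero>, b3 \<ominus> \<zero>, b4 \<ominus> \<one>)"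
        unfolding B(1) using B by (intro M2_minus) auto
      hence "(b1 \<ominus> \<zero>, b2 \<ominus> \<zero>, b3 \<ominus> \<zero>, b4 \<ominus> \<one>) \<in> jacobson (M2 R s)" using P(4)[folded A'_def] by simp
      hence bJ: "b1 \<ominus> \<zero> \<in> jacobson R" "b4 \<ominus> \<one> \<in> jacobson R" using M2_jacD by auto
      hence bJ1: "b1 \<in> jacobson R" using B by (simp add: a_minus_def)
      obtain u v w where F: "u \<in> one_plus_J R" "v \<in> Units R" "w \<in> jacobson R"
        "similar (M2 R s) (b1, \<zero>, \<zero>, b4) (w, \<one>, v, u)"
        "\<exists>t \<in> jacobson R. right_root R (u \<oplus> v \<otimes> w \<otimes> inv v) (v \<otimes> w \<otimes> inv v \<otimes> u \<ominus> s \<otimes> s \<otimes> v) t"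
        "\<exists>t \<in> one_plus_J R. right_root R (u \<oplus> w) (u \<otimes> w \<ominus> s \<otimes> s \<otimes> v) t"
        using case4_form[OF B(5) bJ(2) bJ1] by blast
      have "similar (M2 R s) A (w, \<one>, v, u)"
        using T.similar_trans[OF A P(2)[folded A'_def, unfolded B(1) b23] F(4)] .
      thus ?thesis using F by blast
    qed
  next
    case False
    hence j1: "e1 \<ominus> \<one> \<in> jacobson R" using c1 by simp
    show ?thesis
    proof (cases "e4 \<in> jacobson R")
      case False
      hence j4: "e4 \<ominus> \<one> \<in> jacobson R" using c4 by simp
      have "\<one>\<^bsub>M2 R s\<^esub> \<ominus>\<^bsub>M2 R s\<^esub> e = (\<one> \<ominus> e1, \<zero> \<ominus> e2, \<zero> \<ominus> e3, \<one> \<ominus> e4)"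
        unfolding E(1) M2_one using E by (intro M2_minus) auto
      moreover have "(\<one> \<ominus> e1, \<zero> \<ominus> e2, \<zero> \<ominus> e3, \<one> \<ominus> e4) \<in> jacobson (M2 R s)"
      proof (rule M2_jacI)
        have "\<one> \<ominus> e1 = \<ominus> (e1 \<ominus> \<one>)" "\<one> \<ominus> e4 = \<ominus> (e4 \<ominus> \<one>)" using E by algebra+
        thus "\<one> \<ominus> e1 \<in> jacobson R" "\<one> \<ominus> e4 \<in> jacobson R" using jac_neg j1 j4 by auto
      qed (use E in auto)
      ultimately have eJ: "\<one>\<^bsub>M2 R s\<^esub> \<ominus>\<^bsub>M2 R s\<^esub> e \<in> jacobson (M2 R s)" by simp
      have "\<one>\<^bsub>M2 R s\<^esub> \<ominus>\<^bsub>M2 R s\<^esub> A = (\<one>\<^bsub>M2 R s\<^esub> \<ominus>\<^bsub>M2 R s\<^esub> e) \<ominus>\<^bsub>M2 R s\<^esub> (A \<ominus>\<^bsub>M2 R s\<^esub> e)"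
      proof -
        have l: "\<one>\<^bsub>M2 R s\<^esub> \<ominus>\<^bsub>M2 R s\<^esub> A = (\<one> \<ominus> a1, \<zero> \<ominus> a2, \<zero> \<ominus> a3, \<one> \<ominus> a4)"
          unfolding AA(1) M2_one using AA by (intro M2_minus) auto
        have r: "(\<one>\<^bsub>M2 R s\<^esub> \<ominus>\<^bsub>M2 R s\<^esub> e) \<ominus>\<^bsub>M2 R s\<^esub> (A \<ominus>\<^bsub>M2 R s\<^esub> e) =
          ((\<one> \<ominus> e1) \<ominus> (a1 \<ominus> e1), (\<zero> \<ominus> e2) \<ominus> (a2 \<ominus> e2), (\<zero> \<ominus> e3) \<ominus> (a3 \<ominus> e3), (\<one> \<ominus> e4) \<ominus> (a4 \<ominus> e4))"
          unfolding AA(1) E(1) M2_one using AA E by (simp add: M2_minus)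
        have "(\<one> \<ominus> e1) \<ominus> (a1 \<ominus> e1) = \<one> \<ominus> a1" "(\<zero> \<ominus> e2) \<ominus> (a2 \<ominus> e2) = \<zero> \<ominus> a2"
          "(\<zero> \<ominus> e3) \<ominus> (a3 \<ominus> e3) = \<zero> \<ominus> a3" "(\<one> \<ominus> e4) \<ominus> (a4 \<ominus> e4) = \<one> \<ominus> a4"
          using AA E by algebra+
        thus ?thesis unfolding l r by simp
      qed
      hence "\<one>\<^bsub>M2 R s\<^esub> \<ominus>\<^bsub>M2 R s\<^esub> A \<in> jacobson (M2 R s)" using T.jac_minus[OF eJ e(4)] by simp
      thus ?thesis by simp
    next
      case True
      hence j4: "e4 \<in> jacobson R" by simp
      have fC: "(\<one>, \<zero>, \<zero>, \<zero>) \<in> carrier (M2 R s)" by simp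
      have ff: "(\<one>, \<zero>, \<zero>, \<zero>) \<otimes>\<^bsub>M2 R s\<^esub> (\<one>, \<zero>, \<zero>, \<zero>) = (\<one>, \<zero>, \<zero>, \<zero>)" by simp
      have "e \<ominus>\<^bsub>M2 R s\<^esub> (\<one>, \<zero>, \<zero>, \<zero>) = (e1 \<ominus> \<one>, e2 \<ominus> \<zero>, e3 \<ominus> \<zero>, e4 \<ominus> \<zero>)"
        unfolding E(1) using E by (intro M2_minus) auto
      moreover have "(e1 \<ominus> \<one>, e2 \<ominus> \<zero>, e3 \<ominus> \<zero>, e4 \<ominus> \<zero>) \<in> jacobson (M2 R s)"
        using j1 j4 E by (intro M2_jacI) (auto simp: a_minus_def)
      ultimately obtain P where P: "P \<in> Units (M2 R s)"
        "similar (M2 R s) A (inv\<^bsub>M2 R s\<^esub> P \<otimes>\<^bsub>M2 R s\<^esub> A \<otimes>\<^bsub>M2 R s\<^esub> P)"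
        "(inv\<^bsub>M2 R s\<^esub> P \<otimes>\<^bsub>M2 R s\<^esub> A \<otimes>\<^bsub>M2 R s\<^esub> P) \<otimes>\<^bsub>M2 R s\<^esub> (\<one>, \<zero>, \<zero>, \<zero>) = (\<one>, \<zero>, \<zero>, \<zero>) \<otimes>\<^bsub>M2 R s\<^esub> (inv\<^bsub>M2 R s\<^esub> P \<otimes>\<^bsub>M2 R s\<^esub> A \<otimes>\<^bsub>M2 R s\<^esub> P)"
        "(inv\<^bsub>M2 R s\<^esub> P \<otimes>\<^bsub>M2 R s\<^esub> A \<otimes>\<^bsub>M2 R s\<^esub> P) \<ominus>\<^bsub>M2 R s\<^esub> (\<one>, \<zero>, \<zero>, \<zero>) \<in> jacobson (M2 R s)"
        using key[OF fC ff] by auto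
      define A' where "A' = inv\<^bsub>M2 R s\<^esub> P \<otimes>\<^bsub>M2 R s\<^esub> A \<otimes>\<^bsub>M2 R s\<^esub> P"
      have A'C: "A' \<in> carrier (M2 R s)" unfolding A'_def using P A by auto
      obtain b1 b2 b3 b4 where B: "A' = (b1, b2, b3, b4)" "b1 \<in> carrier R" "b2 \<in> carrier R"
        "b3 \<in> carrier R" "b4 \<in> carrier R" using M2_ex[OF A'C] by blast
      have "(b1, \<zero>, b3, \<zero>) = (b1, b2, \<zero>, \<zero>)" using P(3)[folded A'_def] B by simp
      hence b23: "b2 = \<zero>" "b3 = \<zero>" by auto
      have "A' \<ominus>\<^bsub>M2 R s\<^esub> (\<one>, \<zero>, \<zero>, \<zero>) = (b1 \<ominus> \<one>, b2 \<ominus> \<zero>, b3 \<ominus> \<zero>, b4 \<ominus> \<zero>)"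
        unfolding B(1) using B by (intro M2_minus) auto
      hence "(b1 \<ominus> \<one>, b2 \<ominus> \<zero>, b3 \<ominus> \<zero>, b4 \<ominus> \<zero>) \<in> jacobson (M2 R s)" using P(4)[folded A'_def] by simp
      hence bJ: "b1 \<ominus> \<one> \<in> jacobson R" "b4 \<ominus> \<zero> \<in> jacobson R" using M2_jacD by auto
      hence bJ4: "b4 \<in> jacobson R" using B by (simp add: a_minus_def)
      obtain u v w where F: "u \<in> one_plus_J R" "v \<in> Units R" "w \<in> jacobson R"
        "similar (M2 R s) (b1, \<zero>, \<zero>, b4) (u, \<one>, v, w)"
        "\<exists>t \<in> one_plus_J R. right_root R (v \<otimes> u \<otimes> inv v \<oplus> w) (v \<otimes> u \<otimes> inv v \<otimes> w \<ominus> s \<otimes> s \<otimes> v) t"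
        "\<exists>t \<in> jacobson R. right_root R (u \<oplus> w) (w \<otimes> u \<ominus> s \<otimes> s \<otimes> v) t"
        using case3_form[OF B(2) bJ(1) bJ4] by blast
      have "similar (M2 R s) A (u, \<one>, v, w)"
        using T.similar_trans[OF A P(2)[folded A'_def, unfolded B(1) b23] F(4)] .
      thus ?thesis using F by blast
    qed
  qed
qed


lemma main_bwd:
  assumes A: "A \<in> carrier (M2 R s)"
  and H: "A \<in> jacobson (M2 R s) \<or>
    \<one>\<^bsub>M2 R s\<^esub> \<ominus>\<^bsub>M2 R s\<^esub> A \<in> jacobson (M2 R s) \<or>
    (\<exists>u v w. u \<in> one_plus_J R \<and> v \<in> Units R \<and> w \<in> jacobson R \<and>
       similar (M2 R s) A (u, \<one>, v, w) \<and>
       (\<exists>t \<in> one_plus_J R. right_root R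
          (v \<otimes> u \<otimes> inv v \<oplus> w) (v \<otimes> u \<otimes> inv v \<otimes> w \<ominus> s \<otimes> s \<otimes> v) t) \<and>
       (\<exists>t \<in> jacobson R. right_root R (u \<oplus> w) (w \<otimes> u \<ominus> s \<otimes> s \<otimes> v) t)) \<or>
    (\<exists>u v w. u \<in> one_plus_J R \<and> v \<in> Units R \<and> w \<in> jacobson R \<and>
       similar (M2 R s) A (w, \<one>, v, u) \<and>
       (\<exists>t \<in> jacobson R. right_root R
          (u \<oplus> v \<otimes> w \<otimes> inv v) (v \<otimes> w \<otimes> inv v \<otimes> u \<ominus> s \<otimes> s \<otimes> v) t) \<and>
       (\<exists>t \<in> one_plus_J R. right_root R (u \<oplus> w) (u \<otimes> w \<ominus> s \<otimes> s \<otimes> v) t))"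
  shows "strongly_J_clean (M2 R s) A"
proof -
  obtain a1 a2 a3 a4 where AA: "A = (a1, a2, a3, a4)" "a1 \<in> carrier R" "a2 \<in> carrier R"
    "a3 \<in> carrier R" "a4 \<in> carrier R" using M2_ex[OF A] by blast
  consider (c1) "A \<in> jacobson (M2 R s)" | (c2) "\<one>\<^bsub>M2 R s\<^esub> \<ominus>\<^bsub>M2 R s\<^esub> A \<in> jacobson (M2 R s)"
    | (c3) u v w where "u \<in> one_plus_J R" "v \<in> Units R" "w \<in> jacobson R"
       "similar (M2 R s) A (u, \<one>, v, w)"
       "\<exists>t \<in> one_plus_J R. right_root R
          (v \<otimes> u \<otimes> inv v \<oplus> w) (v \<otimes> u \<otimes> inv v \<otimes> w \<ominus> s \<otimes> s \<otimes> v) t"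
       "\<exists>t \<in> jacobson R. right_root R (u \<oplus> w) (w \<otimes> u \<ominus> s \<otimes> s \<otimes> v) t"
    | (c4) u v w where "u \<in> one_plus_J R" "v \<in> Units R" "w \<in> jacobson R"
       "similar (M2 R s) A (w, \<one>, v, u)"
       "\<exists>t \<in> jacobson R. right_root R
          (u \<oplus> v \<otimes> w \<otimes> inv v) (v \<otimes> w \<otimes> inv v \<otimes> u \<ominus> s \<otimes> s \<otimes> v) t"
       "\<exists>t \<in> one_plus_J R. right_root R (u \<oplus> w) (u \<otimes> w \<ominus> s \<otimes> s \<otimes> v) t"
    using H by blast
  thus ?thesis
  proof cases
    case c1
    have "A \<ominus>\<^bsub>M2 R s\<^esub> \<zero>\<^bsub>M2 R s\<^esub> = A" by (metis T.r_zero T.minus_zero a_minus_def A)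
    thus ?thesis unfolding strongly_J_clean_def using c1 A T.l_null[OF A] T.r_null[OF A]
      by (intro bexI[of _ "\<zero>\<^bsub>M2 R s\<^esub>"]) auto
  next
    case c2
    have l: "A \<ominus>\<^bsub>M2 R s\<^esub> \<one>\<^bsub>M2 R s\<^esub> = (a1 \<ominus> \<one>, a2 \<ominus> \<zero>, a3 \<ominus> \<zero>, a4 \<ominus> \<one>)"
      unfolding AA(1) M2_one using AA by (intro M2_minus) auto
    have r: "\<one>\<^bsub>M2 R s\<^esub> \<ominus>\<^bsub>M2 R s\<^esub> A = (\<one> \<ominus> a1, \<zero> \<ominus> a2, \<zero> \<ominus> a3, \<one> \<ominus> a4)"
      unfolding AA(1) M2_one using AA by (intro M2_minus) auto
    have J: "\<one> \<ominus> a1 \<in> jacobson R" "\<one> \<ominus> a4 \<in> jacobson R" using c2 unfolding r using M2_jacD by auto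
    have "a1 \<ominus> \<one> = \<ominus> (\<one> \<ominus> a1)" "a4 \<ominus> \<one> = \<ominus> (\<one> \<ominus> a4)" using AA by algebra+
    hence "a1 \<ominus> \<one> \<in> jacobson R" "a4 \<ominus> \<one> \<in> jacobson R" using jac_neg J by auto
    hence "A \<ominus>\<^bsub>M2 R s\<^esub> \<one>\<^bsub>M2 R s\<^esub> \<in> jacobson (M2 R s)" unfolding l using AA
      by (intro M2_jacI) auto
    thus ?thesis unfolding strongly_J_clean_def using A T.l_one[OF A] T.r_one[OF A]
      by (intro bexI[of _ "\<one>\<^bsub>M2 R s\<^esub>"]) auto
  next
    case c3
    then obtain t1 t2 where "t1 \<in> one_plus_J R" "right_root R
          (v \<otimes> u \<otimes> inv v \<oplus> w) (v \<otimes> u \<otimes> inv v \<otimes> w \<ominus> s \<otimes> s \<otimes> v) t1"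
      "t2 \<in> jacobson R" "right_root R (u \<oplus> w) (w \<otimes> u \<ominus> s \<otimes> s \<otimes> v) t2" by blast
    hence "strongly_J_clean (M2 R s) (u, \<one>, v, w)" using case3_sjc c3 by blast
    thus ?thesis using T.sjc_similar[OF A c3(4)] by blast
  next
    case c4
    then obtain t1 t2 where "t1 \<in> jacobson R" "right_root R
          (u \<oplus> v \<otimes> w \<otimes> inv v) (v \<otimes> w \<otimes> inv v \<otimes> u \<ominus> s \<otimes> s \<otimes> v) t1"
      "t2 \<in> one_plus_J R" "right_root R (u \<oplus> w) (u \<otimes> w \<ominus> s \<otimes> s \<otimes> v) t2" by blast
    hence "strongly_J_clean (M2 R s) (w, \<one>, v, u)" using case4_sjc c4 by blast
    thus ?thesis using T.sjc_similar[OF A c4(4)] by blast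
  qed
qed

end

theorem theorem2p16:
  fixes R :: "'a ring" and s :: 'a and A :: "'a \<times> 'a \<times> 'a \<times> 'a"
  assumes "ring R" and "local_ring R" and "central R s" and "s \<in> jacobson R"
    and "A \<in> carrier (M2 R s)"
  shows "strongly_J_clean (M2 R s) A \<longleftrightarrow>
    A \<in> jacobson (M2 R s) \<or>
    \<one>\<^bsub>M2 R s\<^esub> \<ominus>\<^bsub>M2 R s\<^esub> A \<in> jacobson (M2 R s) \<or>
    (\<exists>u v w. u \<in> one_plus_J R \<and> v \<in> Units R \<and> w \<in> jacobson R \<and>
       similar (M2 R s) A (u, \<one>\<^bsub>R\<^esub>, v, w) \<and>
       (\<exists>t \<in> one_plus_J R. right_root R
          (v \<otimes>\<^bsub>R\<^esub> u \<otimes>\<^bsub>R\<^esub> inv\<^bsub>R\<^esub> v \<oplus>\<^bsub>R\<^esub> w)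
          (v \<otimes>\<^bsub>R\<^esub> u \<otimes>\<^bsub>R\<^esub> inv\<^bsub>R\<^esub> v \<otimes>\<^bsub>R\<^esub> w \<ominus>\<^bsub>R\<^esub> s \<otimes>\<^bsub>R\<^esub> s \<otimes>\<^bsub>R\<^esub> v) t) \<and>
       (\<exists>t \<in> jacobson R. right_root R
          (u \<oplus>\<^bsub>R\<^esub> w)
          (w \<otimes>\<^bsub>R\<^esub> u \<ominus>\<^bsub>R\<^esub> s \<otimes>\<^bsub>R\<^esub> s \<otimes>\<^bsub>R\<^esub> v) t)) \<or>
    (\<exists>u v w. u \<in> one_plus_J R \<and> v \<in> Units R \<and> w \<in> jacobson R \<and>
       similar (M2 R s) A (w, \<one>\<^bsub>R\<^esub>, v, u) \<and>
       (\<exists>t \<in> jacobson R. right_root R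
          (u \<oplus>\<^bsub>R\<^esub> v \<otimes>\<^bsub>R\<^esub> w \<otimes>\<^bsub>R\<^esub> inv\<^bsub>R\<^esub> v)
          (v \<otimes>\<^bsub>R\<^esub> w \<otimes>\<^bsub>R\<^esub> inv\<^bsub>R\<^esub> v \<otimes>\<^bsub>R\<^esub> u \<ominus>\<^bsub>R\<^esub> s \<otimes>\<^bsub>R\<^esub> s \<otimes>\<^bsub>R\<^esub> v) t) \<and>
       (\<exists>t \<in> one_plus_J R. right_root R
          (u \<oplus>\<^bsub>R\<^esub> w)
          (u \<otimes>\<^bsub>R\<^esub> w \<ominus>\<^bsub>R\<^esub> s \<otimes>\<^bsub>R\<^esub> s \<otimes>\<^bsub>R\<^esub> v) t))"
proof -
  interpret m2J R s
    using assms unfolding m2J_def m2ctx_def m2ctx_axioms_def locring_def locring_axioms_def m2J_axioms_def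
    by simp
  show ?thesis using main_fwd[OF assms(5)] main_bwd[OF assms(5)] by blast
qed


end
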